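(* Consider the algorithm below with parameters $T\in\mathbb{N}$, $C\ge1$, $\varepsilon>0$ and an online estimation oracle satisfying the online estimation assumption. Whenever the cover-computation problem is feasible at every round, the algorithm produces policy covers $p_1,\dots,p_H\in\Delta(\Pi)$ such that with probability at least $1-\delta$, $$\forall h\in[H]:\quad\Psi^{M^\star}_{h,\varepsilon}(p_h)\le 11HC+\frac{12}{\varepsilon}\sqrt{\frac{H^3C\cdot\mathrm{Est}^{\mathrm{on}}_H(\mathcal{M},T,\delta)}{T}}+\frac{8H}{\varepsilon^2}\frac{\mathrm{Est}^{\mathrm{on}}_H(\mathcal{M},T,\delta)}{T}.$$
   Context: Reward-free episodic MDPs over countable $\mathcal{X}$, actions $\mathcal{A}$, horizon $H$; $\Pi\subseteq\Pi_{\mathrm{RNS}}$ a given policy class. For MDP $M$: $d^{M,\pi}_h(x,a)$ layer-$h$ occupancy, $d^{M,p}_h=\mathbb{E}_{\pi\sim p}d^{M,\pi}_h$, $\Psi^M_{h,\varepsilon}(p)=\sup_{\pi\in\Pi}\mathbb{E}^{M,\pi}\big[\frac{d^{M,\pi}_h(x_h,a_h)}{d^{M,p}_h(x_h,a_h)+\varepsilon d^{M,\pi}_h(x_h,a_h)}\big]$. $M(\pi)$: law of trajectory; $D^2_H$: squared Hellinger distance. True MDP $M^\star\in\mathcal{M}$. Online estimation assumption: at each $t$, given $(\pi^{(i)},o^{(i)})_{i<t}$ with $\pi^{(i)}\sim p^{(i)}$, $o^{(i)}\sim M^\star(\pi^{(i)})$, the oracle returns $\widehat M^{(t)}\in\mathcal{M}$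 such that $\sum_{t=1}^T\mathbb{E}_{\pi\sim p^{(t)}}[D^2_H(\widehat M^{(t)}(\pi),M^\star(\pi))]\le\mathrm{Est}^{\mathrm{on}}_H(\mathcal{M},T,\delta)$ with probability $\ge1-\delta$ whenever $M^\star\in\mathcal{M}$. Algorithm: for $t=1,\dots,T$: get $\widehat M^{(t)}$ from the oracle; for each $h$ compute $p^{(t)}_h\in\Delta(\Pi)$ with $\Psi^{\widehat M^{(t)}}_{h,\varepsilon}(p^{(t)}_h)\le C$; let $q^{(t)}=\mathrm{Unif}(p^{(t)}_1,\dots,p^{(t)}_H)$, sample $\pi^{(t)}\sim q^{(t)}$ and observe its trajectory in $M^\star$. Output $p_h=\mathrm{Unif}(p^{(1)}_h,\dots,p^{(T)}_h)$. *)

theory Defs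
  imports "HOL-Probability.Probability"
begin

text \<open>Reward-free episodic MDPs with layers 1..H.  An MDP is given by an initial
  state distribution and layer-dependent transition kernels.\<close>

record ('x, 'a) mdp =
  init :: "'x pmf"
  trans :: "nat \<Rightarrow> 'x \<Rightarrow> 'a \<Rightarrow> 'x pmf"

type_synonym ('x, 'a) policy = "nat \<Rightarrow> 'x \<Rightarrow> 'a pmf"

fun gen :: "('x, 'a) mdp \<Rightarrow> ('x, 'a) policy \<Rightarrow> nat \<Rightarrow> 'x \<Rightarrow> nat \<Rightarrow> ('x \<times> 'a) list pmf" where
  "gen M \<pi> h x 0 = return_pmf []"
| "gen M \<pi> h x (Suc n) =
     bind_pmf (\<pi> h x) (\<lambda>a. bind_pmf (trans M h x a) (\<lambda>x'.
       map_pmf (\<lambda>rest. (x, a) # rest) (gen M \<pi> (Suc h) x' n)))"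

text \<open>Law M(pi) of the trajectory (x_1,a_1),...,(x_H,a_H); entry h-1 of the list is layer h.\<close>
definition traj :: "('x, 'a) mdp \<Rightarrow> ('x, 'a) policy \<Rightarrow> nat \<Rightarrow> ('x \<times> 'a) list pmf" where
  "traj M \<pi> H = bind_pmf (init M) (\<lambda>x. gen M \<pi> 1 x H)"

definition occ :: "('x, 'a) mdp \<Rightarrow> ('x, 'a) policy \<Rightarrow> nat \<Rightarrow> nat \<Rightarrow> 'x \<times> 'a \<Rightarrow> real" where
  "occ M \<pi> H h z = measure_pmf.prob (traj M \<pi> H) {\<tau>. \<tau> ! (h - 1) = z}"

definition occ_mix :: "('x, 'a) mdp \<Rightarrow> ('x, 'a) policy pmf \<Rightarrow> nat \<Rightarrow> nat \<Rightarrow> 'x \<times> 'a \<Rightarrow> real" where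
  "occ_mix M p H h z = measure_pmf.expectation p (\<lambda>\<pi>. occ M \<pi> H h z)"

text \<open>Psi^M_{h,eps}(p); the supremum over Pi of nonnegative quantities (convention: sup of the
  empty family is 0).\<close>
definition Psi :: "('x, 'a) mdp \<Rightarrow> ('x, 'a) policy set \<Rightarrow> nat \<Rightarrow> nat \<Rightarrow> real \<Rightarrow> ('x, 'a) policy pmf \<Rightarrow> real" where
  "Psi M Pol H h \<epsilon> p = Sup (insert 0 ((\<lambda>\<pi>. measure_pmf.expectation (traj M \<pi> H)
      (\<lambda>\<tau>. occ M \<pi> H h (\<tau> ! (h - 1)) /
            (occ_mix M p H h (\<tau> ! (h - 1)) + \<epsilon> * occ M \<pi> H h (\<tau> ! (h - 1))))) ` Pol))"

text \<open>Squared Hellinger distance (without the factor 1/2) between discrete laws.\<close>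
definition hell2 :: "'b pmf \<Rightarrow> 'b pmf \<Rightarrow> real" where
  "hell2 P Q = infsum (\<lambda>\<omega>. (sqrt (pmf P \<omega>) - sqrt (pmf Q \<omega>))^2) UNIV"

text \<open>Histories: chronological list of (policy played, observed trajectory).\<close>
type_synonym ('x, 'a) hist = "(('x, 'a) policy \<times> ('x \<times> 'a) list) list"

fun run :: "(('x, 'a) hist \<Rightarrow> ('x, 'a) policy pmf) \<Rightarrow> ('x, 'a) mdp \<Rightarrow> nat \<Rightarrow> nat \<Rightarrow> ('x, 'a) hist pmf" where
  "run lrn Ms H 0 = return_pmf []"
| "run lrn Ms H (Suc t) =
     bind_pmf (run lrn Ms H t) (\<lambda>hs. bind_pmf (lrn hs) (\<lambda>\<pi>.
       map_pmf (\<lambda>ob. hs @ [(\<pi>, ob)]) (traj Ms \<pi> H)))"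

definition est_err :: "(('x, 'a) hist \<Rightarrow> ('x, 'a) mdp) \<Rightarrow> (('x, 'a) hist \<Rightarrow> ('x, 'a) policy pmf)
    \<Rightarrow> ('x, 'a) mdp \<Rightarrow> nat \<Rightarrow> nat \<Rightarrow> ('x, 'a) hist \<Rightarrow> real" where
  "est_err orc lrn Ms H T hs = (\<Sum>t<T. measure_pmf.expectation (lrn (take t hs))
      (\<lambda>\<pi>. hell2 (traj (orc (take t hs)) \<pi> H) (traj Ms \<pi> H)))"

text \<open>The algorithm's round distribution q^(t) = Unif(p^(t)_1,...,p^(t)_H), where
  p^(t)_h = cover hs h is computed from the history (via the estimate).\<close>
definition alg_lrn :: "(('x, 'a) hist \<Rightarrow> nat \<Rightarrow> ('x, 'a) policy pmf) \<Rightarrow> nat \<Rightarrow> ('x, 'a) hist \<Rightarrow> ('x, 'a) policy pmf" where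
  "alg_lrn cover H hs = bind_pmf (pmf_of_set {1..H}) (\<lambda>h. cover hs h)"

definition alg_out :: "(('x, 'a) hist \<Rightarrow> nat \<Rightarrow> ('x, 'a) policy pmf) \<Rightarrow> nat \<Rightarrow> ('x, 'a) hist \<Rightarrow> nat \<Rightarrow> ('x, 'a) policy pmf" where
  "alg_out cover T hs h = bind_pmf (pmf_of_set {0..<T}) (\<lambda>t. cover (take t hs) h)"

end

theory Submission
  imports Defs
begin

definition bcn :: "'b pmf \<Rightarrow> 'b pmf \<Rightarrow> ennreal" where
  "bcn P Q = (\<integral>\<^sup>+\<omega>. ennreal (sqrt (pmf P \<omega> * pmf Q \<omega>)) \<partial>count_space UNIV)"

definition hn :: "'b pmf \<Rightarrow> 'b pmf \<Rightarrow> ennreal" where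
  "hn P Q = (\<integral>\<^sup>+\<omega>. ennreal ((sqrt (pmf P \<omega>) - sqrt (pmf Q \<omega>))^2) \<partial>count_space UNIV)"

lemma nn_pmf_count: "(\<integral>\<^sup>+\<omega>. ennreal (pmf P \<omega>) \<partial>count_space UNIV) = 1"
  using nn_integral_pmf[where p=P and A=UNIV] measure_pmf.emeasure_space_1[of P] by simp

lemma bcn_sym: "bcn P Q = bcn Q P"
  unfolding bcn_def by (simp add: mult.commute)

lemma hn_bcn: "hn P Q + 2 * bcn P Q = 2"
proof -
  have "hn P Q + 2 * bcn P Q = (\<integral>\<^sup>+\<omega>. ennreal ((sqrt (pmf P \<omega>) - sqrt (pmf Q \<omega>))^2)
        + 2 * ennreal (sqrt (pmf P \<omega> * pmf Q \<omega>)) \<partial>count_space UNIV)"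
    unfolding hn_def bcn_def
    by (simp add: nn_integral_add nn_integral_cmult)
  also have "\<dots> = (\<integral>\<^sup>+\<omega>. ennreal (pmf P \<omega>) + ennreal (pmf Q \<omega>) \<partial>count_space UNIV)"
  proof (rule nn_integral_cong)
    fix \<omega>
    have e: "(sqrt (pmf P \<omega>) - sqrt (pmf Q \<omega>))^2 + 2 * sqrt (pmf P \<omega> * pmf Q \<omega>) = pmf P \<omega> + pmf Q \<omega>"
      by (simp add: power2_eq_square real_sqrt_mult algebra_simps)
    have "ennreal ((sqrt (pmf P \<omega>) - sqrt (pmf Q \<omega>))^2) + 2 * ennreal (sqrt (pmf P \<omega> * pmf Q \<omega>))
        = ennreal ((sqrt (pmf P \<omega>) - sqrt (pmf Q \<omega>))^2 + 2 * sqrt (pmf P \<omega> * pmf Q \<omega>))"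
      by (simp add: ennreal_plus ennreal_mult)
    also have "\<dots> = ennreal (pmf P \<omega>) + ennreal (pmf Q \<omega>)" by (simp add: e ennreal_plus)
    finally show "ennreal ((sqrt (pmf P \<omega>) - sqrt (pmf Q \<omega>))^2) + 2 * ennreal (sqrt (pmf P \<omega> * pmf Q \<omega>))
        = ennreal (pmf P \<omega>) + ennreal (pmf Q \<omega>)" .
  qed
  also have "\<dots> = 2" by (simp add: nn_integral_add nn_pmf_count)
  finally show ?thesis .
qed

lemma bcn_le_1: "bcn P Q \<le> 1"
proof -
  have "bcn P Q \<le> (\<integral>\<^sup>+\<omega>. ennreal (1/2) * ennreal (pmf P \<omega>) + ennreal (1/2) * ennreal (pmf Q \<omega>) \<partial>count_space UNIV)"
    unfolding bcn_def
  proof (rule nn_integral_mono)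
    fix \<omega>
    have "sqrt (pmf P \<omega> * pmf Q \<omega>) \<le> 1/2 * pmf P \<omega> + 1/2 * pmf Q \<omega>"
    proof -
      have "0 \<le> (sqrt (pmf P \<omega>) - sqrt (pmf Q \<omega>))^2" by simp
      then show ?thesis by (simp add: power2_eq_square real_sqrt_mult algebra_simps)
    qed
    then have "ennreal (sqrt (pmf P \<omega> * pmf Q \<omega>)) \<le> ennreal (1/2 * pmf P \<omega> + 1/2 * pmf Q \<omega>)"
      by (rule ennreal_leI)
    also have "\<dots> = ennreal (1/2 * pmf P \<omega>) + ennreal (1/2 * pmf Q \<omega>)"
      by (rule ennreal_plus) simp_all
    also have "\<dots> = ennreal (1/2) * ennreal (pmf P \<omega>) + ennreal (1/2) * ennreal (pmf Q \<omega>)"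
      using ennreal_mult[of "1/2" "pmf P \<omega>"] ennreal_mult[of "1/2" "pmf Q \<omega>"] by simp
    finally show "ennreal (sqrt (pmf P \<omega> * pmf Q \<omega>)) \<le> ennreal (1/2) * ennreal (pmf P \<omega>) + ennreal (1/2) * ennreal (pmf Q \<omega>)" .
  qed
  also have "\<dots> = ennreal (1/2) + ennreal (1/2)"
    by (simp add: nn_integral_add nn_integral_cmult nn_pmf_count)
  also have "\<dots> = ennreal (1/2 + 1/2)" by (rule ennreal_plus[symmetric]) simp_all
  also have "\<dots> = 1" by simp
  finally show ?thesis .
qed

lemma bcn_fin: "bcn P Q \<noteq> \<top>"
  using bcn_le_1[of P Q] by (auto simp: top_unique)

lemma hn_fin: "hn P Q \<noteq> \<top>"
proof
  assume "hn P Q = \<top>"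
  then have "hn P Q + 2 * bcn P Q = \<top>" by simp
  then show False using hn_bcn[of P Q] by simp
qed

definition bcr :: "'b pmf \<Rightarrow> 'b pmf \<Rightarrow> real" where "bcr P Q = enn2real (bcn P Q)"

lemma bcr_ge0: "0 \<le> bcr P Q" by (simp add: bcr_def)
lemma bcr_le1: "bcr P Q \<le> 1" unfolding bcr_def using bcn_le_1[of P Q]
  using enn2real_leI[of 1 "bcn P Q"] by simp
lemma bcr_sym: "bcr P Q = bcr Q P" by (simp add: bcr_def bcn_sym)
lemma ennreal_bcr: "ennreal (bcr P Q) = bcn P Q"
  unfolding bcr_def using bcn_fin[of P Q] by (simp add: ennreal_enn2real top.not_eq_extremum)

lemma hell2_hn: "hell2 P Q = enn2real (hn P Q)"
proof -
  define f where "f = (\<lambda>\<omega>. (sqrt (pmf P \<omega>) - sqrt (pmf Q \<omega>))^2)"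
  have f0: "\<And>\<omega>. 0 \<le> f \<omega>" by (simp add: f_def)
  have fle: "\<And>\<omega>. norm (f \<omega>) \<le> pmf P \<omega> + pmf Q \<omega>"
  proof -
    fix \<omega>
    have "f \<omega> + 2 * sqrt (pmf P \<omega> * pmf Q \<omega>) = pmf P \<omega> + pmf Q \<omega>"
      by (simp add: f_def power2_eq_square real_sqrt_mult algebra_simps)
    moreover have "0 \<le> sqrt (pmf P \<omega> * pmf Q \<omega>)" by simp
    ultimately have "f \<omega> \<le> pmf P \<omega> + pmf Q \<omega>" by linarith
    then show "norm (f \<omega>) \<le> pmf P \<omega> + pmf Q \<omega>" using f0[of \<omega>] by simp
  qed
  have "Infinite_Set_Sum.abs_summable_on (\<lambda>\<omega>. pmf P \<omega> + pmf Q \<omega>) UNIV" by auto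
  then have as: "Infinite_Set_Sum.abs_summable_on f UNIV"
    by (rule abs_summable_on_comparison_test) (use fle in auto)
  have "hell2 P Q = infsum f UNIV" by (simp add: hell2_def f_def)
  also have "\<dots> = infsetsum f UNIV" using infsetsum_infsum[OF as] by simp
  also have "\<dots> = enn2real (nn_integral (count_space UNIV) (\<lambda>\<omega>. ennreal (f \<omega>)))"
    by (rule infsetsum_conv_nn_integral) (use hn_fin[of P Q] f0 in \<open>auto simp: hn_def f_def\<close>)
  finally show ?thesis by (simp add: hn_def f_def)
qed

lemma hell2_bcr: "hell2 P Q = 2 - 2 * bcr P Q"
proof -
  have "enn2real (hn P Q) + 2 * bcr P Q = 2"
  proof -
    have "enn2real (hn P Q + 2 * bcn P Q) = 2" using hn_bcn[of P Q] by simp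
    moreover have "enn2real (hn P Q + 2 * bcn P Q) = enn2real (hn P Q) + enn2real (2 * bcn P Q)"
      by (rule enn2real_plus) (use hn_fin[of P Q] bcn_fin[of P Q] in \<open>auto simp: top.not_eq_extremum ennreal_mult_less_top\<close>)
    moreover have "enn2real (2 * bcn P Q) = 2 * enn2real (bcn P Q)" by (simp add: enn2real_mult)
    ultimately show ?thesis unfolding bcr_def by simp
  qed
  then show ?thesis by (simp add: hell2_hn)
qed

lemma hell2_ge0: "0 \<le> hell2 P Q" using bcr_le1[of P Q] by (simp add: hell2_bcr)
lemma hell2_le2: "hell2 P Q \<le> 2" using bcr_ge0[of P Q] by (simp add: hell2_bcr)
lemma hell2_sym: "hell2 P Q = hell2 Q P" by (simp add: hell2_bcr bcr_sym)

lemma bcn_int: "bcn P Q = (\<integral>\<^sup>+\<omega>. ennreal (sqrt (pmf Q \<omega> / pmf P \<omega>)) \<partial>measure_pmf P)"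
  unfolding bcn_def nn_integral_measure_pmf
proof (rule nn_integral_cong)
  fix \<omega>
  show "ennreal (sqrt (pmf P \<omega> * pmf Q \<omega>)) = ennreal (pmf P \<omega>) * ennreal (sqrt (pmf Q \<omega> / pmf P \<omega>))"
  proof (cases "pmf P \<omega> = 0")
    case True then show ?thesis by simp
  next
    case False
    then have "pmf P \<omega> > 0" using pmf_nonneg[of P \<omega>] by linarith
    then have "pmf P \<omega> * sqrt (pmf Q \<omega> / pmf P \<omega>) = sqrt (pmf P \<omega> * pmf Q \<omega>)"
    proof -
      assume p: "pmf P \<omega> > 0"
      have "pmf P \<omega> * pmf Q \<omega> = (pmf P \<omega>)^2 * (pmf Q \<omega> / pmf P \<omega>)"
        using p by (simp add: power2_eq_square)
      then have "sqrt (pmf P \<omega> * pmf Q \<omega>) = sqrt ((pmf P \<omega>)^2) * sqrt (pmf Q \<omega> / pmf P \<omega>)"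
        by (metis real_sqrt_mult)
      then show ?thesis using p by simp
    qed
    then show ?thesis by (simp add: ennreal_mult'[symmetric])
  qed
qed

lemma pmf_int_bounded: fixes f :: "'a \<Rightarrow> real" shows "(\<And>x. 0 \<le> f x) \<Longrightarrow> (\<And>x. f x \<le> B) \<Longrightarrow> integrable (measure_pmf P) f"
  by (intro measure_pmf.integrable_const_bound[where B=B]) auto

lemma ennreal_expect: 
  fixes f :: "'a \<Rightarrow> real"
  assumes "\<And>x. 0 \<le> f x" "\<And>x. f x \<le> B"
  shows "(\<integral>\<^sup>+x. ennreal (f x) \<partial>measure_pmf P) = ennreal (measure_pmf.expectation P f)"
  by (rule nn_integral_eq_integral) (use pmf_int_bounded[OF assms] assms in auto)

lemma sqrt_ratio: "0 \<le> a \<Longrightarrow> 0 \<le> b \<Longrightarrow> a * sqrt (b / a) = sqrt (a * b)"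
proof (cases "a = 0")
  case False
  assume a: "0 \<le> a" "0 \<le> b"
  then have p: "a > 0" using False by simp
  have "a * b = a^2 * (b / a)" using p by (simp add: power2_eq_square)
  then have "sqrt (a * b) = sqrt (a^2) * sqrt (b / a)" by (metis real_sqrt_mult)
  then show ?thesis using p by simp
qed simp

lemma amgm_aux:
  fixes p q p' q' :: real
  assumes "0 \<le> p" "0 \<le> q" "0 \<le> p'" "0 \<le> q'" "p' = 0 \<Longrightarrow> p = 0" "q' = 0 \<Longrightarrow> q = 0"
  shows "sqrt (p * q) \<le> 1/2 * (p * sqrt (q' / p')) + 1/2 * (q * sqrt (p' / q'))"
proof (cases "p' = 0 \<or> q' = 0")
  case True
  then have "p * q = 0" using assms by auto
  then have "sqrt (p * q) = 0" by simp
  moreover have "0 \<le> p * sqrt (q' / p')" "0 \<le> q * sqrt (p' / q')" using assms by simp_all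
  ultimately show ?thesis by linarith
next
  case False
  then have pp: "p' > 0" "q' > 0" using assms by auto
  define l where "l = sqrt (q' / p')"
  have l: "l > 0" using pp by (simp add: l_def)
  have l': "sqrt (p' / q') = 1 / l" using pp by (simp add: l_def real_sqrt_divide)
  have e: "sqrt (p * l) * sqrt (q / l) = sqrt (p * q)"
    using l by (simp add: real_sqrt_mult[symmetric])
  have "0 \<le> (sqrt (p * l) - sqrt (q / l))^2" by simp
  also have "\<dots> = p * l + q / l - 2 * (sqrt (p * l) * sqrt (q / l))"
    using l assms by (simp add: power2_eq_square algebra_simps)
  finally have "2 * (sqrt (p * l) * sqrt (q / l)) \<le> p * l + q / l" by simp
  then have "2 * sqrt (p * q) \<le> p * l + q / l" by (simp only: e)
  then show ?thesis unfolding l' l_def[symmetric] by simp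
qed

lemma ennreal_half_split:
  assumes "0 \<le> a" "0 \<le> b" "0 \<le> c" "0 \<le> d"
  shows "ennreal (1/2 * (a * b) + 1/2 * (c * d))
       = ennreal (1/2) * (ennreal a * ennreal b) + ennreal (1/2) * (ennreal c * ennreal d)"
proof -
  have "ennreal (1/2 * (a * b) + 1/2 * (c * d)) = ennreal (1/2 * (a * b)) + ennreal (1/2 * (c * d))"
    by (rule ennreal_plus) (use assms in auto)
  also have "ennreal (1/2 * (a * b)) = ennreal (1/2) * ennreal (a * b)"
    by (rule ennreal_mult) (use assms in auto)
  also have "ennreal (a * b) = ennreal a * ennreal b"
    by (rule ennreal_mult) (use assms in auto)
  also have "ennreal (1/2 * (c * d)) = ennreal (1/2) * ennreal (c * d)"
    by (rule ennreal_mult) (use assms in auto)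
  also have "ennreal (c * d) = ennreal c * ennreal d"
    by (rule ennreal_mult) (use assms in auto)
  finally show ?thesis .
qed

lemma half_half: "ennreal (1/2) * x + ennreal (1/2) * x = x"
proof -
  have "ennreal (1/2) * x + ennreal (1/2) * x = (ennreal (1/2) + ennreal (1/2)) * x"
    by (simp add: distrib_right)
  also have "ennreal (1/2) + ennreal (1/2) = ennreal (1/2 + 1/2)" by (rule ennreal_plus[symmetric]) simp_all
  finally show ?thesis by simp
qed

lemma bcn_le_split:
  fixes a b :: "'w \<Rightarrow> real"
  assumes "\<And>\<omega>. 0 \<le> a \<omega>" "\<And>\<omega>. 0 \<le> b \<omega>"
    "\<And>\<omega>. a \<omega> = 0 \<Longrightarrow> pmf P \<omega> = 0" "\<And>\<omega>. b \<omega> = 0 \<Longrightarrow> pmf Q \<omega> = 0"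
  shows "bcn P Q \<le> ennreal (1/2) * (\<integral>\<^sup>+\<omega>. ennreal (sqrt (b \<omega> / a \<omega>)) \<partial>measure_pmf P)
             + ennreal (1/2) * (\<integral>\<^sup>+\<omega>. ennreal (sqrt (a \<omega> / b \<omega>)) \<partial>measure_pmf Q)"
proof -
  have "bcn P Q \<le> (\<integral>\<^sup>+\<omega>. ennreal (1/2) * (ennreal (pmf P \<omega>) * ennreal (sqrt (b \<omega> / a \<omega>)))
          + ennreal (1/2) * (ennreal (pmf Q \<omega>) * ennreal (sqrt (a \<omega> / b \<omega>))) \<partial>count_space UNIV)"
    unfolding bcn_def
  proof (rule nn_integral_mono)
    fix \<omega>
    have "sqrt (pmf P \<omega> * pmf Q \<omega>) \<le> 1/2 * (pmf P \<omega> * sqrt (b \<omega> / a \<omega>)) + 1/2 * (pmf Q \<omega> * sqrt (a \<omega> / b \<omega>))"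
      by (rule amgm_aux) (use assms in auto)
    then have "ennreal (sqrt (pmf P \<omega> * pmf Q \<omega>)) \<le> ennreal (1/2 * (pmf P \<omega> * sqrt (b \<omega> / a \<omega>)) + 1/2 * (pmf Q \<omega> * sqrt (a \<omega> / b \<omega>)))"
      by (rule ennreal_leI)
    also have "\<dots> = ennreal (1/2) * (ennreal (pmf P \<omega>) * ennreal (sqrt (b \<omega> / a \<omega>)))
          + ennreal (1/2) * (ennreal (pmf Q \<omega>) * ennreal (sqrt (a \<omega> / b \<omega>)))"
      by (rule ennreal_half_split) (use assms in auto)
    finally show "ennreal (sqrt (pmf P \<omega> * pmf Q \<omega>)) \<le> ennreal (1/2) * (ennreal (pmf P \<omega>) * ennreal (sqrt (b \<omega> / a \<omega>)))
          + ennreal (1/2) * (ennreal (pmf Q \<omega>) * ennreal (sqrt (a \<omega> / b \<omega>)))" .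
  qed
  also have "\<dots> = ennreal (1/2) * (\<integral>\<^sup>+\<omega>. ennreal (pmf P \<omega>) * ennreal (sqrt (b \<omega> / a \<omega>)) \<partial>count_space UNIV)
             + ennreal (1/2) * (\<integral>\<^sup>+\<omega>. ennreal (pmf Q \<omega>) * ennreal (sqrt (a \<omega> / b \<omega>)) \<partial>count_space UNIV)"
    by (simp add: nn_integral_add nn_integral_cmult)
  also have "\<dots> = ennreal (1/2) * (\<integral>\<^sup>+\<omega>. ennreal (sqrt (b \<omega> / a \<omega>)) \<partial>measure_pmf P)
             + ennreal (1/2) * (\<integral>\<^sup>+\<omega>. ennreal (sqrt (a \<omega> / b \<omega>)) \<partial>measure_pmf Q)"
    by (simp add: nn_integral_measure_pmf)
  finally show ?thesis .
qed

lemma pmf_le_map: "pmf P \<omega> \<le> pmf (map_pmf f P) (f \<omega>)"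
proof -
  have "measure_pmf.prob P {\<omega>} \<le> measure_pmf.prob P (f -` {f \<omega>})"
    by (rule measure_pmf.finite_measure_mono) auto
  then show ?thesis by (simp add: pmf_map measure_pmf_single)
qed

lemma bcn_map_mono: "bcn P Q \<le> bcn (map_pmf f P) (map_pmf f Q)"
proof -
  let ?P = "map_pmf f P" and ?Q = "map_pmf f Q"
  have "bcn P Q \<le> ennreal (1/2) * (\<integral>\<^sup>+\<omega>. ennreal (sqrt (pmf ?Q (f \<omega>) / pmf ?P (f \<omega>))) \<partial>measure_pmf P)
             + ennreal (1/2) * (\<integral>\<^sup>+\<omega>. ennreal (sqrt (pmf ?P (f \<omega>) / pmf ?Q (f \<omega>))) \<partial>measure_pmf Q)"
  proof (rule bcn_le_split)
    fix \<omega>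
    show "pmf ?P (f \<omega>) = 0 \<Longrightarrow> pmf P \<omega> = 0" using pmf_le_map[of P \<omega> f] pmf_nonneg[of P \<omega>] by linarith
    show "pmf ?Q (f \<omega>) = 0 \<Longrightarrow> pmf Q \<omega> = 0" using pmf_le_map[of Q \<omega> f] pmf_nonneg[of Q \<omega>] by linarith
  qed auto
  also have "\<dots> = ennreal (1/2) * bcn ?P ?Q + ennreal (1/2) * bcn ?Q ?P"
    by (simp add: bcn_int)
  also have "\<dots> = bcn ?P ?Q" by (simp only: bcn_sym[of ?Q ?P] half_half)
  finally show ?thesis .
qed

lemma hell2_map_mono: "hell2 (map_pmf f P) (map_pmf f Q) \<le> hell2 P Q"
proof -
  have "bcr P Q \<le> bcr (map_pmf f P) (map_pmf f Q)"
    unfolding bcr_def by (rule enn2real_mono[OF bcn_map_mono]) (use bcn_fin in \<open>simp add: less_top[symmetric]\<close>)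
  then show ?thesis by (simp add: hell2_bcr)
qed

lemma bcn_bind_mono: "(\<integral>\<^sup>+\<pi>. bcn (F \<pi>) (G \<pi>) \<partial>measure_pmf p) \<le> bcn (bind_pmf p F) (bind_pmf p G)"
proof -
  let ?F = "bind_pmf p F" and ?G = "bind_pmf p G"
  have "(\<integral>\<^sup>+\<pi>. bcn (F \<pi>) (G \<pi>) \<partial>measure_pmf p) \<le>
        (\<integral>\<^sup>+\<pi>. ennreal (1/2) * (\<integral>\<^sup>+\<omega>. ennreal (sqrt (pmf ?G \<omega> / pmf ?F \<omega>)) \<partial>measure_pmf (F \<pi>))
             + ennreal (1/2) * (\<integral>\<^sup>+\<omega>. ennreal (sqrt (pmf ?F \<omega> / pmf ?G \<omega>)) \<partial>measure_pmf (G \<pi>)) \<partial>measure_pmf p)"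
  proof (rule nn_integral_mono_AE)
    show "AE \<pi> in measure_pmf p. bcn (F \<pi>) (G \<pi>) \<le> ennreal (1/2) * (\<integral>\<^sup>+\<omega>. ennreal (sqrt (pmf ?G \<omega> / pmf ?F \<omega>)) \<partial>measure_pmf (F \<pi>))
             + ennreal (1/2) * (\<integral>\<^sup>+\<omega>. ennreal (sqrt (pmf ?F \<omega> / pmf ?G \<omega>)) \<partial>measure_pmf (G \<pi>))"
      unfolding AE_measure_pmf_iff
    proof (intro ballI bcn_le_split)
      fix \<pi> \<omega> assume \<pi>: "\<pi> \<in> set_pmf p"
      show "pmf ?F \<omega> = 0 \<Longrightarrow> pmf (F \<pi>) \<omega> = 0" using \<pi> by (auto simp: pmf_eq_0_set_pmf)
      show "pmf ?G \<omega> = 0 \<Longrightarrow> pmf (G \<pi>) \<omega> = 0" using \<pi> by (auto simp: pmf_eq_0_set_pmf)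
    qed auto
  qed
  also have "\<dots> = ennreal (1/2) * (\<integral>\<^sup>+\<omega>. ennreal (sqrt (pmf ?G \<omega> / pmf ?F \<omega>)) \<partial>measure_pmf ?F)
             + ennreal (1/2) * (\<integral>\<^sup>+\<omega>. ennreal (sqrt (pmf ?F \<omega> / pmf ?G \<omega>)) \<partial>measure_pmf ?G)"
    by (simp add: nn_integral_add nn_integral_cmult)
  also have "\<dots> = ennreal (1/2) * bcn ?F ?G + ennreal (1/2) * bcn ?G ?F" by (simp only: bcn_int[symmetric])
  also have "\<dots> = bcn ?F ?G" by (simp only: bcn_sym[of ?G ?F] half_half)
  finally show ?thesis .
qed

lemma hell2_bind_mono:
  "hell2 (bind_pmf p F) (bind_pmf p G) \<le> measure_pmf.expectation p (\<lambda>\<pi>. hell2 (F \<pi>) (G \<pi>))"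
proof -
  have "ennreal (measure_pmf.expectation p (\<lambda>\<pi>. bcr (F \<pi>) (G \<pi>))) = (\<integral>\<^sup>+\<pi>. ennreal (bcr (F \<pi>) (G \<pi>)) \<partial>measure_pmf p)"
    by (rule ennreal_expect[symmetric, where B=1]) (auto simp: bcr_ge0 bcr_le1)
  also have "\<dots> = (\<integral>\<^sup>+\<pi>. bcn (F \<pi>) (G \<pi>) \<partial>measure_pmf p)" by (simp add: ennreal_bcr)
  also have "\<dots> \<le> bcn (bind_pmf p F) (bind_pmf p G)" by (rule bcn_bind_mono)
  also have "\<dots> = ennreal (bcr (bind_pmf p F) (bind_pmf p G))" by (simp add: ennreal_bcr)
  finally have le: "measure_pmf.expectation p (\<lambda>\<pi>. bcr (F \<pi>) (G \<pi>)) \<le> bcr (bind_pmf p F) (bind_pmf p G)"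
    by (simp add: bcr_ge0)
  have "measure_pmf.expectation p (\<lambda>\<pi>. hell2 (F \<pi>) (G \<pi>)) = 2 - 2 * measure_pmf.expectation p (\<lambda>\<pi>. bcr (F \<pi>) (G \<pi>))"
    unfolding hell2_bcr
    using pmf_int_bounded[of "\<lambda>\<pi>. bcr (F \<pi>) (G \<pi>)" 1 p] by (simp add: bcr_ge0 bcr_le1)
  then show ?thesis using le by (simp add: hell2_bcr)
qed

abbreviation asum :: "('b \<Rightarrow> real) \<Rightarrow> bool" where
  "asum f \<equiv> Infinite_Set_Sum.abs_summable_on f UNIV"

lemma asum_dom:
  assumes "\<And>x. \<bar>f x\<bar> \<le> c * (pmf P x + pmf Q x)"
  shows "asum f"
proof (rule abs_summable_on_comparison_test')
  show "asum (\<lambda>x. c * (pmf P x + pmf Q x))"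
    by (intro abs_summable_on_cmult_right abs_summable_on_add) auto
qed (use assms in auto)

lemma asum_pmf_bounded:
  fixes f :: "'b \<Rightarrow> real"
  assumes "\<And>x. \<bar>f x\<bar> \<le> B"
  shows "asum (\<lambda>x. pmf P x * f x)"
proof (rule asum_dom[where c=B and P=P and Q=P])
  fix x
  have B: "0 \<le> B" using assms[of x] by linarith
  have "pmf P x * \<bar>f x\<bar> \<le> pmf P x * B" by (rule mult_left_mono) (use assms in auto)
  moreover have "0 \<le> pmf P x * B" using B by simp
  ultimately show "\<bar>pmf P x * f x\<bar> \<le> B * (pmf P x + pmf P x)" by (simp add: abs_mult algebra_simps)
qed

lemma isum2: "asum f \<Longrightarrow> asum g \<Longrightarrow> infsetsum (\<lambda>x. f x + g x) UNIV = infsetsum f UNIV + infsetsum g UNIV"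
  by (rule infsetsum_add)

lemma isum3: "asum f \<Longrightarrow> asum g \<Longrightarrow> asum h \<Longrightarrow>
   infsetsum (\<lambda>x. f x + g x + h x) UNIV = infsetsum f UNIV + infsetsum g UNIV + infsetsum h UNIV"
  by (simp add: infsetsum_add abs_summable_on_add)

lemma isum_c: "asum f \<Longrightarrow> infsetsum (\<lambda>x. c * f x) UNIV = c * infsetsum f UNIV"
  by (rule infsetsum_cmult_right)

lemma asum_c: "asum f \<Longrightarrow> asum (\<lambda>x. c * f x)"
  by (rule abs_summable_on_cmult_right)

lemma sum_pmf1: "infsetsum (pmf P) UNIV = 1"
  by (rule infsetsum_pmf_eq_1) simp

lemma hell2_isum: "hell2 P Q = infsetsum (\<lambda>\<omega>. (sqrt (pmf P \<omega>) - sqrt (pmf Q \<omega>))^2) UNIV"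
proof -
  define f where "f = (\<lambda>\<omega>. (sqrt (pmf P \<omega>) - sqrt (pmf Q \<omega>))^2)"
  have as: "asum f"
  proof (rule asum_dom[where c=1 and P=P and Q=Q])
    fix \<omega>
    have "f \<omega> + 2 * sqrt (pmf P \<omega> * pmf Q \<omega>) = pmf P \<omega> + pmf Q \<omega>"
      by (simp add: f_def power2_eq_square real_sqrt_mult algebra_simps)
    moreover have "0 \<le> sqrt (pmf P \<omega> * pmf Q \<omega>)" "0 \<le> f \<omega>" by (simp_all add: f_def)
    ultimately have "f \<omega> \<le> pmf P \<omega> + pmf Q \<omega>" by linarith
    then show "\<bar>f \<omega>\<bar> \<le> 1 * (pmf P \<omega> + pmf Q \<omega>)" using \<open>0 \<le> f \<omega>\<close> by simp
  qed
  have "hell2 P Q = infsum f UNIV" by (simp add: hell2_def f_def)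
  also have "\<dots> = infsetsum f UNIV" using infsetsum_infsum[OF as] by simp
  finally show ?thesis by (simp add: f_def)
qed

lemma asum_sq: "asum (\<lambda>\<omega>. (sqrt (pmf P \<omega>) - sqrt (pmf Q \<omega>))^2)"
proof (rule asum_dom[where c=1 and P=P and Q=Q])
  fix \<omega>
  have "(sqrt (pmf P \<omega>) - sqrt (pmf Q \<omega>))^2 + 2 * sqrt (pmf P \<omega> * pmf Q \<omega>) = pmf P \<omega> + pmf Q \<omega>"
    by (simp add: power2_eq_square real_sqrt_mult algebra_simps)
  moreover have "0 \<le> sqrt (pmf P \<omega> * pmf Q \<omega>)" by simp
  ultimately have "(sqrt (pmf P \<omega>) - sqrt (pmf Q \<omega>))^2 \<le> pmf P \<omega> + pmf Q \<omega>" by linarith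
  then show "\<bar>(sqrt (pmf P \<omega>) - sqrt (pmf Q \<omega>))^2\<bar> \<le> 1 * (pmf P \<omega> + pmf Q \<omega>)" by simp
qed

lemma asum_bc: "asum (\<lambda>\<omega>. sqrt (pmf P \<omega> * pmf Q \<omega>))"
proof (rule asum_dom[where c=1 and P=P and Q=Q])
  fix \<omega>
  have "(sqrt (pmf P \<omega>) - sqrt (pmf Q \<omega>))^2 + 2 * sqrt (pmf P \<omega> * pmf Q \<omega>) = pmf P \<omega> + pmf Q \<omega>"
    by (simp add: power2_eq_square real_sqrt_mult algebra_simps)
  moreover have "0 \<le> (sqrt (pmf P \<omega>) - sqrt (pmf Q \<omega>))^2" by simp
  moreover have "0 \<le> sqrt (pmf P \<omega> * pmf Q \<omega>)" by simp
  ultimately have "sqrt (pmf P \<omega> * pmf Q \<omega>) \<le> pmf P \<omega> + pmf Q \<omega>" by linarith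
  then show "\<bar>sqrt (pmf P \<omega> * pmf Q \<omega>)\<bar> \<le> 1 * (pmf P \<omega> + pmf Q \<omega>)" by simp
qed

lemma bcr_isum: "bcr P Q = infsetsum (\<lambda>\<omega>. sqrt (pmf P \<omega> * pmf Q \<omega>)) UNIV"
proof -
  have "infsetsum (\<lambda>\<omega>. (sqrt (pmf P \<omega>) - sqrt (pmf Q \<omega>))^2 + 2 * sqrt (pmf P \<omega> * pmf Q \<omega>)) UNIV
      = infsetsum (\<lambda>\<omega>. pmf P \<omega> + pmf Q \<omega>) UNIV"
    by (rule infsetsum_cong) (simp_all add: power2_eq_square real_sqrt_mult algebra_simps)
  also have "\<dots> = infsetsum (pmf P) UNIV + infsetsum (pmf Q) UNIV" by (rule infsetsum_add) auto
  also have "\<dots> = 2" by (simp add: sum_pmf1)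
  moreover have "infsetsum (\<lambda>\<omega>. (sqrt (pmf P \<omega>) - sqrt (pmf Q \<omega>))^2 + 2 * sqrt (pmf P \<omega> * pmf Q \<omega>)) UNIV
     = hell2 P Q + 2 * infsetsum (\<lambda>\<omega>. sqrt (pmf P \<omega> * pmf Q \<omega>)) UNIV"
    unfolding hell2_isum by (simp only: isum2[OF asum_sq asum_c[OF asum_bc]] isum_c[OF asum_bc])
  ultimately have "hell2 P Q + 2 * infsetsum (\<lambda>\<omega>. sqrt (pmf P \<omega> * pmf Q \<omega>)) UNIV = 2"
    by simp
  then show ?thesis by (simp add: hell2_bcr)
qed

lemma pmf_joint: "pmf (bind_pmf \<mu> (\<lambda>z. map_pmf (Pair z) (K z))) (z, w) = pmf \<mu> z * pmf (K z) w"
proof -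
  have "pmf (bind_pmf \<mu> (\<lambda>z. map_pmf (Pair z) (K z))) (z, w)
      = measure_pmf.expectation \<mu> (\<lambda>z'. indicator {z} z' * pmf (K z) w)"
    unfolding pmf_bind
  proof (rule Bochner_Integration.integral_cong)
    fix z' show "pmf (map_pmf (Pair z') (K z')) (z, w) = indicator {z} z' * pmf (K z) w"
    proof (cases "z' = z")
      case True then show ?thesis using pmf_map_inj'[of "Pair z" "K z" w] by (simp add: inj_on_def)
    next
      case False then show ?thesis by (auto intro!: pmf_map_outside)
    qed
  qed simp
  also have "\<dots> = measure_pmf.prob \<mu> {z} * pmf (K z) w" by simp
  finally show ?thesis by (simp add: measure_pmf_single)
qed

lemma bcn_joint:
  "bcn (bind_pmf \<mu> (\<lambda>z. map_pmf (Pair z) (K z))) (bind_pmf \<nu> (\<lambda>z. map_pmf (Pair z) (L z)))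
   = (\<integral>\<^sup>+z. ennreal (sqrt (pmf \<nu> z / pmf \<mu> z)) * bcn (K z) (L z) \<partial>measure_pmf \<mu>)"
proof -
  let ?J1 = "bind_pmf \<mu> (\<lambda>z. map_pmf (Pair z) (K z))" and ?J2 = "bind_pmf \<nu> (\<lambda>z. map_pmf (Pair z) (L z))"
  have "bcn ?J1 ?J2 = (\<integral>\<^sup>+z. \<integral>\<^sup>+w. ennreal (sqrt (pmf ?J2 (z, w) / pmf ?J1 (z, w))) \<partial>measure_pmf (K z) \<partial>measure_pmf \<mu>)"
    by (simp add: bcn_int[of ?J1 ?J2])
  also have "\<dots> = (\<integral>\<^sup>+z. \<integral>\<^sup>+w. ennreal (sqrt (pmf \<nu> z / pmf \<mu> z)) * ennreal (sqrt (pmf (L z) w / pmf (K z) w)) \<partial>measure_pmf (K z) \<partial>measure_pmf \<mu>)"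
  proof (intro nn_integral_cong)
    fix z w
    have e: "pmf ?J2 (z, w) / pmf ?J1 (z, w) = (pmf \<nu> z / pmf \<mu> z) * (pmf (L z) w / pmf (K z) w)"
      by (simp add: pmf_joint times_divide_times_eq)
    have "sqrt (pmf ?J2 (z, w) / pmf ?J1 (z, w)) = sqrt (pmf \<nu> z / pmf \<mu> z) * sqrt (pmf (L z) w / pmf (K z) w)"
      unfolding e by (rule real_sqrt_mult)
    then show "ennreal (sqrt (pmf ?J2 (z, w) / pmf ?J1 (z, w))) = ennreal (sqrt (pmf \<nu> z / pmf \<mu> z)) * ennreal (sqrt (pmf (L z) w / pmf (K z) w))"
      by (simp add: ennreal_mult)
  qed
  also have "\<dots> = (\<integral>\<^sup>+z. ennreal (sqrt (pmf \<nu> z / pmf \<mu> z)) * bcn (K z) (L z) \<partial>measure_pmf \<mu>)"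
    by (simp add: nn_integral_cmult bcn_int)
  finally show ?thesis .
qed

lemma bcr_joint:
  "bcr (bind_pmf \<mu> (\<lambda>z. map_pmf (Pair z) (K z))) (bind_pmf \<nu> (\<lambda>z. map_pmf (Pair z) (L z)))
   = infsetsum (\<lambda>z. sqrt (pmf \<mu> z * pmf \<nu> z) * bcr (K z) (L z)) UNIV"
proof -
  have as: "asum (\<lambda>z. sqrt (pmf \<mu> z * pmf \<nu> z) * bcr (K z) (L z))"
  proof (rule abs_summable_on_comparison_test'[OF asum_bc[of \<mu> \<nu>]])
    fix z
    show "norm (sqrt (pmf \<mu> z * pmf \<nu> z) * bcr (K z) (L z)) \<le> sqrt (pmf \<mu> z * pmf \<nu> z)"
      using bcr_le1[of "K z" "L z"] bcr_ge0[of "K z" "L z"]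
      by (simp add: abs_mult mult_left_le)
  qed
  have "bcn (bind_pmf \<mu> (\<lambda>z. map_pmf (Pair z) (K z))) (bind_pmf \<nu> (\<lambda>z. map_pmf (Pair z) (L z)))
      = (\<integral>\<^sup>+z. ennreal (pmf \<mu> z) * (ennreal (sqrt (pmf \<nu> z / pmf \<mu> z)) * bcn (K z) (L z)) \<partial>count_space UNIV)"
    by (simp add: bcn_joint nn_integral_measure_pmf)
  also have "\<dots> = (\<integral>\<^sup>+z. ennreal (sqrt (pmf \<mu> z * pmf \<nu> z) * bcr (K z) (L z)) \<partial>count_space UNIV)"
  proof (rule nn_integral_cong)
    fix z
    have "pmf \<mu> z * sqrt (pmf \<nu> z / pmf \<mu> z) = sqrt (pmf \<mu> z * pmf \<nu> z)" by (simp add: sqrt_ratio)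
    then show "ennreal (pmf \<mu> z) * (ennreal (sqrt (pmf \<nu> z / pmf \<mu> z)) * bcn (K z) (L z))
        = ennreal (sqrt (pmf \<mu> z * pmf \<nu> z) * bcr (K z) (L z))"
      by (simp add: ennreal_bcr[symmetric] ennreal_mult[symmetric] bcr_ge0 mult.assoc[symmetric])
  qed
  also have "\<dots> = ennreal (infsetsum (\<lambda>z. sqrt (pmf \<mu> z * pmf \<nu> z) * bcr (K z) (L z)) UNIV)"
    by (rule nn_integral_conv_infsetsum[OF as]) (simp add: bcr_ge0)
  finally show ?thesis unfolding bcr_def
    by (simp add: bcr_ge0 infsetsum_nonneg)
qed

lemma chain_pointwise:
  fixes m n b :: real
  assumes "0 \<le> m" "0 \<le> n" "0 \<le> b" "b \<le> 1"
  shows "m + 2 * (sqrt (m * n) * b) + 2 * sqrt (m * n) \<le> 2 * m + 2 * n + m * b"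
proof -
  define s r where "s = sqrt m" and "r = sqrt n"
  have m: "m = s^2" and n: "n = r^2" and mn: "sqrt (m * n) = s * r"
    using assms by (simp_all add: s_def r_def real_sqrt_mult)
  have "0 \<le> (1 + b) * (s - r)^2 + (1 - b) * r^2" using assms by simp
  moreover have "2 * m + 2 * n + m * b - (m + 2 * (sqrt (m * n) * b) + 2 * sqrt (m * n))
      = (1 + b) * (s - r)^2 + (1 - b) * r^2"
    by (simp only: mn) (simp add: m n power2_eq_square algebra_simps)
  ultimately show ?thesis by linarith
qed

lemma chain_ineq:
  "measure_pmf.expectation \<mu> (\<lambda>z. hell2 (K z) (L z))
   \<le> 2 * hell2 (bind_pmf \<mu> (\<lambda>z. map_pmf (Pair z) (K z))) (bind_pmf \<nu> (\<lambda>z. map_pmf (Pair z) (L z)))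
     + 2 * hell2 \<mu> \<nu>"
proof -
  let ?J1 = "bind_pmf \<mu> (\<lambda>z. map_pmf (Pair z) (K z))" and ?J2 = "bind_pmf \<nu> (\<lambda>z. map_pmf (Pair z) (L z))"
  define b where "b z = bcr (K z) (L z)" for z
  have b01: "0 \<le> b z" "b z \<le> 1" for z by (simp_all add: b_def bcr_ge0 bcr_le1)
  have a1: "asum (pmf \<mu>)" "asum (pmf \<nu>)" by auto
  have a2: "asum (\<lambda>z. sqrt (pmf \<mu> z * pmf \<nu> z) * b z)"
    by (rule abs_summable_on_comparison_test'[OF asum_bc[of \<mu> \<nu>]]) (use b01 in \<open>simp add: abs_mult mult_left_le\<close>)
  have a3: "asum (\<lambda>z. sqrt (pmf \<mu> z * pmf \<nu> z))" by (rule asum_bc)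
  have a4: "asum (\<lambda>z. pmf \<mu> z * b z)" by (rule asum_pmf_bounded[where B=1]) (use b01 in auto)
  have "infsetsum (\<lambda>z. pmf \<mu> z + 2 * (sqrt (pmf \<mu> z * pmf \<nu> z) * b z) + 2 * sqrt (pmf \<mu> z * pmf \<nu> z)) UNIV
     \<le> infsetsum (\<lambda>z. 2 * pmf \<mu> z + 2 * pmf \<nu> z + pmf \<mu> z * b z) UNIV"
    by (rule infsetsum_mono) (use a1 a2 a3 a4 b01 chain_pointwise in \<open>auto intro!: abs_summable_on_add abs_summable_on_cmult_right\<close>)
  moreover have "infsetsum (\<lambda>z. pmf \<mu> z + 2 * (sqrt (pmf \<mu> z * pmf \<nu> z) * b z) + 2 * sqrt (pmf \<mu> z * pmf \<nu> z)) UNIV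
      = 1 + 2 * bcr ?J1 ?J2 + 2 * bcr \<mu> \<nu>"
  proof -
    have "infsetsum (\<lambda>z. pmf \<mu> z + 2 * (sqrt (pmf \<mu> z * pmf \<nu> z) * b z) + 2 * sqrt (pmf \<mu> z * pmf \<nu> z)) UNIV
      = infsetsum (pmf \<mu>) UNIV + 2 * infsetsum (\<lambda>z. sqrt (pmf \<mu> z * pmf \<nu> z) * b z) UNIV
        + 2 * infsetsum (\<lambda>z. sqrt (pmf \<mu> z * pmf \<nu> z)) UNIV"
      by (simp only: isum3[OF a1(1) asum_c[OF a2] asum_c[OF a3]] isum_c[OF a2] isum_c[OF a3])
    moreover have "infsetsum (\<lambda>z. sqrt (pmf \<mu> z * pmf \<nu> z) * b z) UNIV = bcr ?J1 ?J2"
      by (simp add: bcr_joint b_def)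
    moreover have "infsetsum (\<lambda>z. sqrt (pmf \<mu> z * pmf \<nu> z)) UNIV = bcr \<mu> \<nu>"
      by (simp add: bcr_isum)
    ultimately show ?thesis by (simp add: sum_pmf1)
  qed
  moreover have "infsetsum (\<lambda>z. 2 * pmf \<mu> z + 2 * pmf \<nu> z + pmf \<mu> z * b z) UNIV
      = 4 + measure_pmf.expectation \<mu> b"
  proof -
    have "infsetsum (\<lambda>z. 2 * pmf \<mu> z + 2 * pmf \<nu> z + pmf \<mu> z * b z) UNIV
      = 2 * infsetsum (pmf \<mu>) UNIV + 2 * infsetsum (pmf \<nu>) UNIV + infsetsum (\<lambda>z. pmf \<mu> z * b z) UNIV"
      by (simp only: isum3[OF asum_c[OF a1(1)] asum_c[OF a1(2)] a4] isum_c[OF a1(1)] isum_c[OF a1(2)])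
    then show ?thesis by (simp add: sum_pmf1 pmf_expectation_eq_infsetsum)
  qed
  ultimately have key: "1 + 2 * bcr ?J1 ?J2 + 2 * bcr \<mu> \<nu> \<le> 4 + measure_pmf.expectation \<mu> b" by simp
  have "measure_pmf.expectation \<mu> (\<lambda>z. hell2 (K z) (L z)) = 2 - 2 * measure_pmf.expectation \<mu> b"
    unfolding hell2_bcr b_def[symmetric]
    using pmf_int_bounded[of b 1 \<mu>] b01 by simp
  then show ?thesis using key by (simp add: hell2_bcr)
qed

lemma cm_pointwise:
  fixes V P Q l :: real
  assumes V: "0 \<le> V" "V \<le> 1" and PQ: "0 \<le> P" "0 \<le> Q" and l: "0 < l"
  shows "P * V + 1/2 * Q \<le> Q * V + 1/2 * P + l/4 * (sqrt P - sqrt Q)^2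
          + 1/(4*l) * P + 1/(4*l) * Q + 1/(2*l) * sqrt (P * Q)"
proof -
  define a c where "a = sqrt P" and "c = sqrt Q"
  have a: "P = a^2" "0 \<le> a" and c: "Q = c^2" "0 \<le> c" using PQ by (simp_all add: a_def c_def)
  have ac: "sqrt (P * Q) = a * c" using PQ by (simp add: a_def c_def real_sqrt_mult)
  define d s where "d = a - c" and "s = a + c"
  have s0: "0 \<le> s" using a c by (simp add: s_def)
  have h1: "(V - 1/2) * (P - Q) \<le> 1/2 * \<bar>P - Q\<bar>"
  proof -
    have "(V - 1/2) * (P - Q) \<le> \<bar>V - 1/2\<bar> * \<bar>P - Q\<bar>" by (metis abs_ge_self abs_mult)
    also have "\<dots> \<le> 1/2 * \<bar>P - Q\<bar>"
    proof (rule mult_right_mono)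
      show "\<bar>V - 1/2\<bar> \<le> 1/2" using V unfolding abs_le_iff by linarith
    qed simp
    finally show ?thesis .
  qed
  have h2: "\<bar>P - Q\<bar> = \<bar>d\<bar> * s"
  proof -
    have "P - Q = d * s" by (simp add: a(1) c(1) d_def s_def power2_eq_square algebra_simps)
    then show ?thesis using s0 by (simp add: abs_mult)
  qed
  have h3: "\<bar>d\<bar> * s \<le> l/2 * d^2 + s^2 / (2*l)"
  proof -
    have "0 \<le> (l * \<bar>d\<bar> - s)^2" by simp
    also have "(l * \<bar>d\<bar> - s)^2 = l^2 * d^2 + s^2 - 2 * l * (\<bar>d\<bar> * s)"
      by (simp add: power2_eq_square algebra_simps abs_mult_self_eq)
    finally have "2 * l * (\<bar>d\<bar> * s) \<le> l^2 * d^2 + s^2" by simp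
    then have "\<bar>d\<bar> * s \<le> (l^2 * d^2 + s^2) / (2 * l)" using l by (simp add: pos_le_divide_eq mult.commute)
    also have "(l^2 * d^2 + s^2) / (2 * l) = l/2 * d^2 + s^2 / (2*l)" using l by (simp add: field_simps power2_eq_square)
    finally show ?thesis .
  qed
  have "s^2 = P + Q + 2 * sqrt (P * Q)" unfolding ac by (simp add: s_def a(1) c(1) power2_eq_square algebra_simps)
  then have C: "s^2 / (4*l) = 1/(4*l) * P + 1/(4*l) * Q + 1/(2*l) * sqrt (P * Q)" using l by (simp add: field_simps)
  have D: "(sqrt P - sqrt Q)^2 = d^2" by (simp add: d_def a_def c_def)
  have E: "P * V + 1/2 * Q - (Q * V + 1/2 * P) = (V - 1/2) * (P - Q)" by (simp add: field_simps)
  have B: "1/2 * (\<bar>d\<bar> * s) \<le> l/4 * d^2 + s^2 / (4*l)"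
  proof -
    have "1/2 * (\<bar>d\<bar> * s) \<le> 1/2 * (l/2 * d^2 + s^2 / (2*l))" using h3 by simp
    also have "\<dots> = l/4 * d^2 + s^2 / (4*l)" by (simp add: field_simps)
    finally show ?thesis .
  qed
  have A: "(V - 1/2) * (P - Q) \<le> 1/2 * (\<bar>d\<bar> * s)" using h1 h2 by simp
  show ?thesis unfolding D using A B C E by linarith
qed

lemma isum_lin6:
  assumes "asum f1" "asum f2" "asum f3" "asum f4" "asum f5" "asum f6"
  shows "infsetsum (\<lambda>x. f1 x + c2 * f2 x + c3 * f3 x + c4 * f4 x + c5 * f5 x + c6 * f6 x) UNIV
    = infsetsum f1 UNIV + c2 * infsetsum f2 UNIV + c3 * infsetsum f3 UNIV + c4 * infsetsum f4 UNIV
      + c5 * infsetsum f5 UNIV + c6 * infsetsum f6 UNIV"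
  using assms by (simp add: infsetsum_add abs_summable_on_add abs_summable_on_cmult_right infsetsum_cmult_right)

lemma isum_lin2:
  assumes "asum f1" "asum f2"
  shows "infsetsum (\<lambda>x. f1 x + c2 * f2 x) UNIV = infsetsum f1 UNIV + c2 * infsetsum f2 UNIV"
  using assms by (simp add: infsetsum_add abs_summable_on_add abs_summable_on_cmult_right infsetsum_cmult_right)

lemma cm_lambda:
  fixes V :: "'b \<Rightarrow> real"
  assumes V0: "\<And>\<omega>. 0 \<le> V \<omega>" and V1: "\<And>\<omega>. V \<omega> \<le> 1" and l: "0 < l"
  shows "measure_pmf.expectation P V \<le> measure_pmf.expectation Q V + l/4 * hell2 P Q + 1/l"
proof -
  have aPV: "asum (\<lambda>\<omega>. pmf P \<omega> * V \<omega>)" by (rule asum_pmf_bounded[where B=1]) (use V0 V1 in auto)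
  have aQV: "asum (\<lambda>\<omega>. pmf Q \<omega> * V \<omega>)" by (rule asum_pmf_bounded[where B=1]) (use V0 V1 in auto)
  have aP: "asum (pmf P)" "asum (pmf Q)" by auto
  note as = aPV aQV aP asum_sq[of P Q] asum_bc[of P Q]
  have "infsetsum (\<lambda>\<omega>. pmf P \<omega> * V \<omega> + 1/2 * pmf Q \<omega>) UNIV \<le>
        infsetsum (\<lambda>\<omega>. pmf Q \<omega> * V \<omega> + 1/2 * pmf P \<omega> + l/4 * (sqrt (pmf P \<omega>) - sqrt (pmf Q \<omega>))^2
          + 1/(4*l) * pmf P \<omega> + 1/(4*l) * pmf Q \<omega> + 1/(2*l) * sqrt (pmf P \<omega> * pmf Q \<omega>)) UNIV"
  proof (rule infsetsum_mono)
    show "asum (\<lambda>\<omega>. pmf P \<omega> * V \<omega> + 1/2 * pmf Q \<omega>)"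
      by (intro abs_summable_on_add abs_summable_on_cmult_right as)
    show "asum (\<lambda>\<omega>. pmf Q \<omega> * V \<omega> + 1/2 * pmf P \<omega> + l/4 * (sqrt (pmf P \<omega>) - sqrt (pmf Q \<omega>))^2
          + 1/(4*l) * pmf P \<omega> + 1/(4*l) * pmf Q \<omega> + 1/(2*l) * sqrt (pmf P \<omega> * pmf Q \<omega>))"
      by (intro abs_summable_on_add abs_summable_on_cmult_right as)
    fix \<omega>
    show "pmf P \<omega> * V \<omega> + 1/2 * pmf Q \<omega> \<le> pmf Q \<omega> * V \<omega> + 1/2 * pmf P \<omega> + l/4 * (sqrt (pmf P \<omega>) - sqrt (pmf Q \<omega>))^2
          + 1/(4*l) * pmf P \<omega> + 1/(4*l) * pmf Q \<omega> + 1/(2*l) * sqrt (pmf P \<omega> * pmf Q \<omega>)"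
      by (rule cm_pointwise) (use V0 V1 l in auto)
  qed
  also have "\<dots> = measure_pmf.expectation Q V + 1/2 + l/4 * hell2 P Q + 1/(4*l) + 1/(4*l) + 1/(2*l) * bcr P Q"
    by (simp only: isum_lin6[OF aQV aP(1) asum_sq[of P Q] aP(1) aP(2) asum_bc[of P Q]])
       (simp add: sum_pmf1 pmf_expectation_eq_infsetsum hell2_isum bcr_isum)
  also have "\<dots> \<le> measure_pmf.expectation Q V + 1/2 + l/4 * hell2 P Q + 1/l"
  proof -
    have "1/(2*l) * bcr P Q \<le> 1/(2*l)" using bcr_le1[of P Q] l by (simp add: field_simps)
    moreover have "1/(4*l) + 1/(4*l) + 1/(2*l) = 1/l" using l by (simp add: field_simps)
    ultimately show ?thesis by linarith
  qed
  finally have "infsetsum (\<lambda>\<omega>. pmf P \<omega> * V \<omega> + 1/2 * pmf Q \<omega>) UNIV \<le> measure_pmf.expectation Q V + 1/2 + l/4 * hell2 P Q + 1/l" .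
  moreover have "infsetsum (\<lambda>\<omega>. pmf P \<omega> * V \<omega> + 1/2 * pmf Q \<omega>) UNIV = measure_pmf.expectation P V + 1/2"
    by (simp only: isum_lin2[OF aPV aP(2)]) (simp add: sum_pmf1 pmf_expectation_eq_infsetsum)
  ultimately show ?thesis by simp
qed

lemma le_eps_inv:
  fixes a b :: real
  assumes "\<And>l. 0 < l \<Longrightarrow> a \<le> b + 1/l"
  shows "a \<le> b"
proof (rule ccontr)
  assume "\<not> a \<le> b"
  then have g: "0 < a - b" by simp
  have "a \<le> b + 1 / (2 / (a - b))" by (rule assms) (use g in simp)
  also have "1 / (2 / (a - b)) = (a - b) / 2" by simp
  finally show False using g by (simp add: field_simps)
qed

lemma cm:
  fixes V :: "'b \<Rightarrow> real"
  assumes V0: "\<And>\<omega>. 0 \<le> V \<omega>" and V1: "\<And>\<omega>. V \<omega> \<le> 1"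
  shows "measure_pmf.expectation P V \<le> measure_pmf.expectation Q V + sqrt (hell2 P Q)"
proof (cases "hell2 P Q > 0")
  case True
  define l where "l = 2 / sqrt (hell2 P Q)"
  have l: "0 < l" using True by (simp add: l_def)
  have f1: "l/4 * hell2 P Q = sqrt (hell2 P Q) / 2"
    using True unfolding l_def by (simp add: field_simps)
  have f2: "1/l = sqrt (hell2 P Q) / 2" by (simp add: l_def)
  have f3: "measure_pmf.expectation P V \<le> measure_pmf.expectation Q V + l/4 * hell2 P Q + 1/l"
    by (rule cm_lambda[where V=V and P=P and Q=Q, OF V0 V1 l])
  show ?thesis using f1 f2 f3 by linarith
next
  case False
  then have h: "hell2 P Q = 0" using hell2_ge0[of P Q] by simp
  have "\<And>l. 0 < l \<Longrightarrow> measure_pmf.expectation P V \<le> measure_pmf.expectation Q V + 1/l"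
  proof -
    fix l :: real assume l: "0 < l"
    have f3: "measure_pmf.expectation P V \<le> measure_pmf.expectation Q V + l/4 * hell2 P Q + 1/l"
      by (rule cm_lambda[where V=V and P=P and Q=Q, OF V0 V1 l])
    then show "measure_pmf.expectation P V \<le> measure_pmf.expectation Q V + 1/l" using h by simp
  qed
  then have "measure_pmf.expectation P V \<le> measure_pmf.expectation Q V" by (rule le_eps_inv)
  then show ?thesis using h by simp
qed

lemma expect_01:
  fixes V :: "'b \<Rightarrow> real"
  assumes V0: "\<And>\<omega>. 0 \<le> V \<omega>" and V1: "\<And>\<omega>. V \<omega> \<le> 1"
  shows "0 \<le> measure_pmf.expectation P V" "measure_pmf.expectation P V \<le> 1"
proof -
  show "0 \<le> measure_pmf.expectation P V" using V0 by (simp add: integral_nonneg_AE)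
  have "measure_pmf.expectation P V \<le> measure_pmf.expectation P (\<lambda>_. 1)"
    by (rule integral_mono) (use pmf_int_bounded[OF V0 V1] V1 in auto)
  then show "measure_pmf.expectation P V \<le> 1" by simp
qed

lemma cm_min:
  fixes V :: "'b \<Rightarrow> real"
  assumes V0: "\<And>\<omega>. 0 \<le> V \<omega>" and V1: "\<And>\<omega>. V \<omega> \<le> 1"
  shows "measure_pmf.expectation P V \<le> measure_pmf.expectation Q V + min 1 (sqrt (hell2 P Q))"
  using cm[where V=V and P=P and Q=Q, OF V0 V1] expect_01[where V=V and P=P, OF V0 V1] expect_01[where V=V and P=Q, OF V0 V1]
  by (simp add: min_def)

abbreviation EE :: "'b pmf \<Rightarrow> ('b \<Rightarrow> real) \<Rightarrow> real" where
  "EE P f \<equiv> measure_pmf.expectation P f"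

lemma integral_bind_pmf_nn:
  fixes f :: "'b \<Rightarrow> real"
  assumes f0: "\<And>y. 0 \<le> f y" and fB: "\<And>y. f y \<le> B"
  shows "EE (bind_pmf M N) f = EE M (\<lambda>x. EE (N x) f)"
proof -
  have B: "0 \<le> B" using f0 fB order.trans by blast
  have in0: "\<And>x. 0 \<le> EE (N x) f" by (simp add: f0 integral_nonneg_AE)
  have inB: "\<And>x. EE (N x) f \<le> B"
  proof -
    fix x
    have "EE (N x) f \<le> EE (N x) (\<lambda>_. B)" by (rule integral_mono) (use pmf_int_bounded[OF f0 fB] fB in auto)
    then show "EE (N x) f \<le> B" by simp
  qed
  have "ennreal (EE (bind_pmf M N) f) = (\<integral>\<^sup>+y. ennreal (f y) \<partial>measure_pmf (bind_pmf M N))"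
    by (rule ennreal_expect[OF f0 fB, symmetric])
  also have "\<dots> = (\<integral>\<^sup>+x. \<integral>\<^sup>+y. ennreal (f y) \<partial>measure_pmf (N x) \<partial>measure_pmf M)" by simp
  also have "\<dots> = (\<integral>\<^sup>+x. ennreal (EE (N x) f) \<partial>measure_pmf M)"
    by (simp add: ennreal_expect[OF f0 fB])
  also have "\<dots> = ennreal (EE M (\<lambda>x. EE (N x) f))" by (rule ennreal_expect[OF in0 inB])
  finally show ?thesis
    using in0 by (simp add: integral_nonneg_AE f0)
qed

lemma EE_mono:
  fixes f g :: "'b \<Rightarrow> real"
  assumes "\<And>x. \<bar>f x\<bar> \<le> B" "\<And>x. \<bar>g x\<bar> \<le> B" "\<And>x. f x \<le> g x"
  shows "EE P f \<le> EE P g"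
  by (rule integral_mono) (auto intro!: measure_pmf.integrable_const_bound[where B=B] simp: assms)

lemma EE_add:
  fixes f g :: "'b \<Rightarrow> real"
  assumes "\<And>x. \<bar>f x\<bar> \<le> B" "\<And>x. \<bar>g x\<bar> \<le> B"
  shows "EE P (\<lambda>x. f x + g x) = EE P f + EE P g"
  by (rule Bochner_Integration.integral_add) (auto intro!: measure_pmf.integrable_const_bound[where B=B] simp: assms)

lemma EE_sum:
  fixes f :: "nat \<Rightarrow> 'b \<Rightarrow> real"
  assumes "\<And>j x. \<bar>f j x\<bar> \<le> B"
  shows "EE P (\<lambda>x. \<Sum>j<k. f j x) = (\<Sum>j<k. EE P (f j))"
  by (rule Bochner_Integration.integral_sum) (auto intro!: measure_pmf.integrable_const_bound[where B=B] simp: assms)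

lemma EE_01:
  fixes f :: "'b \<Rightarrow> real"
  assumes "\<And>x. 0 \<le> f x" "\<And>x. f x \<le> B"
  shows "0 \<le> EE P f" "EE P f \<le> B"
proof -
  show "0 \<le> EE P f" using assms by (simp add: integral_nonneg_AE)
  have "EE P f \<le> EE P (\<lambda>_. B)" by (rule integral_mono) (use pmf_int_bounded[OF assms] assms in auto)
  then show "EE P f \<le> B" by simp
qed

fun lay :: "('x, 'a) mdp \<Rightarrow> ('x, 'a) policy \<Rightarrow> nat \<Rightarrow> 'x \<Rightarrow> nat \<Rightarrow> ('x \<times> 'a) pmf" where
  "lay M \<pi> h x 0 = map_pmf (\<lambda>a. (x, a)) (\<pi> h x)"
| "lay M \<pi> h x (Suc k) = bind_pmf (\<pi> h x) (\<lambda>a. bind_pmf (trans M h x a) (\<lambda>x'. lay M \<pi> (Suc h) x' k))"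

lemma gen_nth: "k < n \<Longrightarrow> map_pmf (\<lambda>\<tau>. \<tau> ! k) (gen M \<pi> h x n) = lay M \<pi> h x k"
proof (induction k arbitrary: h x n)
  case 0
  then obtain n' where n: "n = Suc n'" by (cases n) auto
  show ?case unfolding n
    by (simp add: map_bind_pmf map_pmf_comp map_pmf_def[of "\<lambda>a. (x, a)"] bind_return_pmf)
next
  case (Suc k)
  then obtain n' where n: "n = Suc n'" and k: "k < n'" by (cases n) auto
  show ?case unfolding n
    by (simp add: map_bind_pmf map_pmf_comp Suc.IH[OF k])
qed

lemma lay_Suc_EE:
  fixes f :: "'x \<times> 'a \<Rightarrow> real"
  assumes f0: "\<And>z. 0 \<le> f z" and f1: "\<And>z. f z \<le> 1"
  shows "EE (lay M \<pi> l x (Suc j)) f = EE (\<pi> l x) (\<lambda>a. EE (trans M l x a) (\<lambda>x'. EE (lay M \<pi> (Suc l) x' j) f))"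
proof -
  have e0: "0 \<le> EE (lay M \<pi> (Suc l) x' j) f" "EE (lay M \<pi> (Suc l) x' j) f \<le> 1" for x'
    by (rule EE_01[where f=f and B=1, OF f0 f1])+
  show ?thesis
    by (simp add: integral_bind_pmf_nn[where f=f and B=1, OF f0 f1]
      integral_bind_pmf_nn[where f="\<lambda>x'. EE (lay M \<pi> (Suc l) x' j) f" and B=1, OF e0])
qed

definition smis :: "('x, 'a) mdp \<Rightarrow> ('x, 'a) mdp \<Rightarrow> nat \<Rightarrow> 'x \<times> 'a \<Rightarrow> real" where
  "smis M1 M2 m z = min 1 (sqrt (hell2 (trans M1 m (fst z) (snd z)) (trans M2 m (fst z) (snd z))))"

lemma smis01: "0 \<le> smis M1 M2 m z" "smis M1 M2 m z \<le> 1"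
  by (simp_all add: smis_def hell2_ge0)

lemma sim_lay:
  fixes g :: "'x \<times> 'a \<Rightarrow> real"
  assumes g0: "\<And>z. 0 \<le> g z" and g1: "\<And>z. g z \<le> 1"
  shows "EE (lay M1 \<pi> l x k) g \<le> EE (lay M2 \<pi> l x k) g + (\<Sum>j<k. EE (lay M2 \<pi> l x j) (smis M1 M2 (l + j)))"
proof (induction k arbitrary: l x)
  case 0
  show ?case by simp
next
  case (Suc k)
  define V1 where "V1 x' = EE (lay M1 \<pi> (Suc l) x' k) g" for x'
  define V2 where "V2 x' = EE (lay M2 \<pi> (Suc l) x' k) g" for x'
  define W where "W x' = (\<Sum>j<k. EE (lay M2 \<pi> (Suc l) x' j) (smis M1 M2 (Suc l + j)))" for x'
  have V1b: "0 \<le> V1 x'" "V1 x' \<le> 1" for x' unfolding V1_def by (rule EE_01[OF g0 g1])+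
  have V2b: "0 \<le> V2 x'" "V2 x' \<le> 1" for x' unfolding V2_def by (rule EE_01[OF g0 g1])+
  have Wb: "0 \<le> W x'" "W x' \<le> real k" for x'
  proof -
    have t: "0 \<le> EE (lay M2 \<pi> (Suc l) x' j) (smis M1 M2 (Suc l + j))" "EE (lay M2 \<pi> (Suc l) x' j) (smis M1 M2 (Suc l + j)) \<le> 1" for j
      by (rule EE_01[OF smis01])+
    show "0 \<le> W x'" unfolding W_def by (rule sum_nonneg) (use t in auto)
    have "W x' \<le> (\<Sum>j<k. 1)" unfolding W_def by (rule sum_mono) (use t in auto)
    then show "W x' \<le> real k" by simp
  qed
  have IH: "V1 x' \<le> V2 x' + W x'" for x' unfolding V1_def V2_def W_def by (rule Suc.IH)
  have L1: "EE (lay M1 \<pi> l x (Suc k)) g = EE (\<pi> l x) (\<lambda>a. EE (trans M1 l x a) V1)"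
    unfolding V1_def by (rule lay_Suc_EE[OF g0 g1])
  have L2: "EE (lay M2 \<pi> l x (Suc k)) g = EE (\<pi> l x) (\<lambda>a. EE (trans M2 l x a) V2)"
    unfolding V2_def by (rule lay_Suc_EE[OF g0 g1])
  have EV1: "0 \<le> EE P V1" "EE P V1 \<le> 1" for P by (rule EE_01[where f=V1 and B=1, OF V1b])+
  have EV2: "0 \<le> EE P V2" "EE P V2 \<le> 1" for P by (rule EE_01[where f=V2 and B=1, OF V2b])+
  have EW: "0 \<le> EE P W" "EE P W \<le> real k" for P by (rule EE_01[where f=W and B="real k", OF Wb])+
  have step: "EE (trans M1 l x a) V1 \<le> EE (trans M2 l x a) V2 + EE (trans M2 l x a) W + smis M1 M2 l (x, a)" for a
  proof -
    have "EE (trans M1 l x a) V1 \<le> EE (trans M2 l x a) V1 + smis M1 M2 l (x, a)"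
      unfolding smis_def by (simp add: cm_min[OF V1b])
    also have "EE (trans M2 l x a) V1 \<le> EE (trans M2 l x a) (\<lambda>x'. V2 x' + W x')"
    proof (rule EE_mono[where B="1 + real k"])
      fix y
      show "\<bar>V1 y\<bar> \<le> 1 + real k" using V1b[of y] by simp
      show "\<bar>V2 y + W y\<bar> \<le> 1 + real k" using V2b[of y] Wb[of y] by simp
      show "V1 y \<le> V2 y + W y" by (rule IH)
    qed
    also have "EE (trans M2 l x a) (\<lambda>x'. V2 x' + W x') = EE (trans M2 l x a) V2 + EE (trans M2 l x a) W"
    proof (rule EE_add[where B="1 + real k"])
      fix y
      show "\<bar>V2 y\<bar> \<le> 1 + real k" using V2b[of y] by simp
      show "\<bar>W y\<bar> \<le> 1 + real k" using Wb[of y] by simp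
    qed
    finally show ?thesis by simp
  qed
  have E1: "EE (\<pi> l x) (\<lambda>a. EE (trans M1 l x a) V1) \<le>
      EE (\<pi> l x) (\<lambda>a. EE (trans M2 l x a) V2 + EE (trans M2 l x a) W + smis M1 M2 l (x, a))"
  proof (rule EE_mono[where B="2 + real k"])
    fix a
    show "\<bar>EE (trans M1 l x a) V1\<bar> \<le> 2 + real k" using EV1[of "trans M1 l x a"] by simp
    show "\<bar>EE (trans M2 l x a) V2 + EE (trans M2 l x a) W + smis M1 M2 l (x, a)\<bar> \<le> 2 + real k"
      using EV2[of "trans M2 l x a"] EW[of "trans M2 l x a"] smis01[of M1 M2 l "(x, a)"] by simp
  qed (rule step)
  have E2: "EE (\<pi> l x) (\<lambda>a. EE (trans M2 l x a) V2 + EE (trans M2 l x a) W + smis M1 M2 l (x, a))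
     = EE (\<pi> l x) (\<lambda>a. EE (trans M2 l x a) V2) + EE (\<pi> l x) (\<lambda>a. EE (trans M2 l x a) W)
       + EE (\<pi> l x) (\<lambda>a. smis M1 M2 l (x, a))"
  proof -
    have b1: "\<bar>EE (trans M2 l x a) V2\<bar> \<le> 2 + real k" for a using EV2[of "trans M2 l x a"] by simp
    have b2: "\<bar>EE (trans M2 l x a) W\<bar> \<le> 2 + real k" for a using EW[of "trans M2 l x a"] by simp
    have b3: "\<bar>smis M1 M2 l (x, a)\<bar> \<le> 2 + real k" for a using smis01[of M1 M2 l "(x, a)"] by simp
    have b12: "\<bar>EE (trans M2 l x a) V2 + EE (trans M2 l x a) W\<bar> \<le> 2 + real k" for a
      using EV2[of "trans M2 l x a"] EW[of "trans M2 l x a"] by simp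
    have "EE (\<pi> l x) (\<lambda>a. EE (trans M2 l x a) V2 + EE (trans M2 l x a) W + smis M1 M2 l (x, a))
        = EE (\<pi> l x) (\<lambda>a. EE (trans M2 l x a) V2 + EE (trans M2 l x a) W) + EE (\<pi> l x) (\<lambda>a. smis M1 M2 l (x, a))"
      by (rule EE_add[OF b12 b3])
    also have "EE (\<pi> l x) (\<lambda>a. EE (trans M2 l x a) V2 + EE (trans M2 l x a) W)
        = EE (\<pi> l x) (\<lambda>a. EE (trans M2 l x a) V2) + EE (\<pi> l x) (\<lambda>a. EE (trans M2 l x a) W)"
      by (rule EE_add[OF b1 b2])
    finally show ?thesis .
  qed
  have S0: "EE (lay M2 \<pi> l x 0) (smis M1 M2 (l + 0)) = EE (\<pi> l x) (\<lambda>a. smis M1 M2 l (x, a))" by simp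
  have SS: "(\<Sum>j<k. EE (lay M2 \<pi> l x (Suc j)) (smis M1 M2 (l + Suc j))) = EE (\<pi> l x) (\<lambda>a. EE (trans M2 l x a) W)"
  proof -
    have "(\<Sum>j<k. EE (lay M2 \<pi> l x (Suc j)) (smis M1 M2 (l + Suc j)))
        = (\<Sum>j<k. EE (\<pi> l x) (\<lambda>a. EE (trans M2 l x a) (\<lambda>x'. EE (lay M2 \<pi> (Suc l) x' j) (smis M1 M2 (Suc l + j)))))"
    proof (rule sum.cong)
      fix j
      have e: "l + Suc j = Suc l + j" by simp
      show "EE (lay M2 \<pi> l x (Suc j)) (smis M1 M2 (l + Suc j)) =
         EE (\<pi> l x) (\<lambda>a. EE (trans M2 l x a) (\<lambda>x'. EE (lay M2 \<pi> (Suc l) x' j) (smis M1 M2 (Suc l + j))))"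
        unfolding e by (rule lay_Suc_EE[where f="smis M1 M2 (Suc l + j)", OF smis01(1) smis01(2)])
    qed simp
    also have "\<dots> = EE (\<pi> l x) (\<lambda>a. (\<Sum>j<k. EE (trans M2 l x a) (\<lambda>x'. EE (lay M2 \<pi> (Suc l) x' j) (smis M1 M2 (Suc l + j)))))"
    proof (rule EE_sum[symmetric, where B=1])
      fix j a
      have "0 \<le> EE (lay M2 \<pi> (Suc l) x' j) (smis M1 M2 (Suc l + j))" "EE (lay M2 \<pi> (Suc l) x' j) (smis M1 M2 (Suc l + j)) \<le> 1" for x'
        by (rule EE_01[where f="smis M1 M2 (Suc l + j)" and B=1, OF smis01(1) smis01(2)])+
      from EE_01[where f="\<lambda>x'. EE (lay M2 \<pi> (Suc l) x' j) (smis M1 M2 (Suc l + j))" and B=1 and P="trans M2 l x a", OF this]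
      show "\<bar>EE (trans M2 l x a) (\<lambda>x'. EE (lay M2 \<pi> (Suc l) x' j) (smis M1 M2 (Suc l + j)))\<bar> \<le> 1" by simp
    qed
    also have "\<dots> = EE (\<pi> l x) (\<lambda>a. EE (trans M2 l x a) W)"
    proof -
      have "EE (trans M2 l x a) W = (\<Sum>j<k. EE (trans M2 l x a) (\<lambda>x'. EE (lay M2 \<pi> (Suc l) x' j) (smis M1 M2 (Suc l + j))))" for a
        unfolding W_def
      proof (rule EE_sum[where B=1])
        fix j x'
        show "\<bar>EE (lay M2 \<pi> (Suc l) x' j) (smis M1 M2 (Suc l + j))\<bar> \<le> 1"
          using EE_01[where f="smis M1 M2 (Suc l + j)" and B=1 and P="lay M2 \<pi> (Suc l) x' j", OF smis01(1) smis01(2)] by simp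
      qed
      then show ?thesis by simp
    qed
    finally show ?thesis .
  qed
  have "(\<Sum>j<Suc k. EE (lay M2 \<pi> l x j) (smis M1 M2 (l + j)))
      = EE (lay M2 \<pi> l x 0) (smis M1 M2 (l + 0)) + (\<Sum>j<k. EE (lay M2 \<pi> l x (Suc j)) (smis M1 M2 (l + Suc j)))"
    by (rule sum.lessThan_Suc_shift)
  then show ?case using L1 L2 E1 E2 S0 SS by simp
qed

definition Dl :: "('x, 'a) mdp \<Rightarrow> ('x, 'a) policy \<Rightarrow> nat \<Rightarrow> nat \<Rightarrow> ('x \<times> 'a) pmf" where
  "Dl M \<pi> H l = map_pmf (\<lambda>\<tau>. \<tau> ! (l - 1)) (traj M \<pi> H)"

definition Dm :: "('x, 'a) mdp \<Rightarrow> ('x, 'a) policy pmf \<Rightarrow> nat \<Rightarrow> nat \<Rightarrow> ('x \<times> 'a) pmf" where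
  "Dm M p H l = bind_pmf p (\<lambda>\<pi>. Dl M \<pi> H l)"

lemma Dl_eq: "1 \<le> l \<Longrightarrow> l \<le> H \<Longrightarrow> Dl M \<pi> H l = bind_pmf (init M) (\<lambda>x. lay M \<pi> 1 x (l - 1))"
  unfolding Dl_def traj_def by (simp add: map_bind_pmf gen_nth)

lemma occ_eq: "occ M \<pi> H l z = pmf (Dl M \<pi> H l) z"
  unfolding occ_def Dl_def pmf_map by (simp add: vimage_def)

lemma occ_mix_eq: "occ_mix M p H l z = pmf (Dm M p H l) z"
  unfolding occ_mix_def Dm_def pmf_bind by (simp add: occ_eq)

lemma traj_EE: "EE (traj M \<pi> H) (\<lambda>\<tau>. f (\<tau> ! (l - 1))) = EE (Dl M \<pi> H l) f"
  unfolding Dl_def by simp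

lemma gen_joint:
  "Suc k < n \<Longrightarrow> map_pmf (\<lambda>\<tau>. (\<tau> ! k, fst (\<tau> ! Suc k))) (gen M \<pi> h x n)
     = bind_pmf (lay M \<pi> h x k) (\<lambda>z. map_pmf (Pair z) (trans M (h + k) (fst z) (snd z)))"
proof (induction k arbitrary: h x n)
  case 0
  then obtain n' where n: "n = Suc n'" and n': "0 < n'" by (cases n) auto
  have r: "map_pmf (\<lambda>rest. fst (rest ! 0)) (gen M \<pi> (Suc h) x' n') = return_pmf x'" for x'
  proof -
    have "map_pmf (\<lambda>rest. fst (rest ! 0)) (gen M \<pi> (Suc h) x' n') = map_pmf fst (map_pmf (\<lambda>rest. rest ! 0) (gen M \<pi> (Suc h) x' n'))"
      by (simp add: map_pmf_comp)
    also have "\<dots> = map_pmf fst (lay M \<pi> (Suc h) x' 0)" by (simp only: gen_nth[OF n'])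
    also have "\<dots> = return_pmf x'" by (simp add: map_pmf_comp)
    finally show ?thesis .
  qed
  have "map_pmf (\<lambda>\<tau>. (\<tau> ! 0, fst (\<tau> ! Suc 0))) (gen M \<pi> h x n)
      = bind_pmf (\<pi> h x) (\<lambda>a. bind_pmf (trans M h x a) (\<lambda>x'. map_pmf (\<lambda>rest. ((x, a), fst (rest ! 0))) (gen M \<pi> (Suc h) x' n')))"
    unfolding n by (simp add: map_bind_pmf map_pmf_comp)
  also have "\<dots> = bind_pmf (\<pi> h x) (\<lambda>a. bind_pmf (trans M h x a) (\<lambda>x'. return_pmf ((x, a), x')))"
  proof -
    have rr: "map_pmf (\<lambda>rest. ((x, a), fst (rest ! 0))) (gen M \<pi> (Suc h) x' n') = return_pmf ((x, a), x')" for a x'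
    proof -
      have "map_pmf (\<lambda>rest. ((x, a), fst (rest ! 0))) (gen M \<pi> (Suc h) x' n')
          = map_pmf (Pair (x, a)) (map_pmf (\<lambda>rest. fst (rest ! 0)) (gen M \<pi> (Suc h) x' n'))"
        by (simp add: map_pmf_comp)
      then show ?thesis by (simp add: r)
    qed
    show ?thesis by (simp only: rr)
  qed
  also have "\<dots> = bind_pmf (lay M \<pi> h x 0) (\<lambda>z. map_pmf (Pair z) (trans M (h + 0) (fst z) (snd z)))"
    by (simp add: map_pmf_def bind_assoc_pmf bind_return_pmf)
  finally show ?case .
next
  case (Suc k)
  then obtain n' where n: "n = Suc n'" and k: "Suc k < n'" by (cases n) auto
  have "map_pmf (\<lambda>\<tau>. (\<tau> ! Suc k, fst (\<tau> ! Suc (Suc k)))) (gen M \<pi> h x n)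
     = bind_pmf (\<pi> h x) (\<lambda>a. bind_pmf (trans M h x a) (\<lambda>x'. map_pmf (\<lambda>\<tau>. (\<tau> ! k, fst (\<tau> ! Suc k))) (gen M \<pi> (Suc h) x' n')))"
    unfolding n by (simp add: map_bind_pmf map_pmf_comp)
  also have "\<dots> = bind_pmf (\<pi> h x) (\<lambda>a. bind_pmf (trans M h x a) (\<lambda>x'.
      bind_pmf (lay M \<pi> (Suc h) x' k) (\<lambda>z. map_pmf (Pair z) (trans M (Suc h + k) (fst z) (snd z)))))"
    by (simp add: Suc.IH[OF k])
  also have "\<dots> = bind_pmf (lay M \<pi> h x (Suc k)) (\<lambda>z. map_pmf (Pair z) (trans M (h + Suc k) (fst z) (snd z)))"
    by (simp add: bind_assoc_pmf)
  finally show ?case .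
qed

definition Jl :: "('x, 'a) mdp \<Rightarrow> ('x, 'a) policy \<Rightarrow> nat \<Rightarrow> nat \<Rightarrow> (('x \<times> 'a) \<times> 'x) pmf" where
  "Jl M \<pi> H l = map_pmf (\<lambda>\<tau>. (\<tau> ! (l - 1), fst (\<tau> ! l))) (traj M \<pi> H)"

lemma Jl_eq: "1 \<le> l \<Longrightarrow> l < H \<Longrightarrow>
  Jl M \<pi> H l = bind_pmf (Dl M \<pi> H l) (\<lambda>z. map_pmf (Pair z) (trans M l (fst z) (snd z)))"
proof -
  assume l: "1 \<le> l" "l < H"
  have s: "Suc (l - 1) = l" "Suc (l - Suc 0) = l" using l by simp_all
  have e1: "(\<lambda>\<tau>. (\<tau> ! (l - 1), fst (\<tau> ! l))) = (\<lambda>\<tau>. (\<tau> ! (l - 1), fst (\<tau> ! Suc (l - 1))))" using s by simp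
  have gj: "map_pmf (\<lambda>\<tau>. (\<tau> ! (l - 1), fst (\<tau> ! Suc (l - 1)))) (gen M \<pi> 1 x H)
     = bind_pmf (lay M \<pi> 1 x (l - 1)) (\<lambda>z. map_pmf (Pair z) (trans M (1 + (l - 1)) (fst z) (snd z)))" for x
    by (rule gen_joint) (use l in simp)
  have "Jl M \<pi> H l = bind_pmf (init M) (\<lambda>x. map_pmf (\<lambda>\<tau>. (\<tau> ! (l - 1), fst (\<tau> ! Suc (l - 1)))) (gen M \<pi> 1 x H))"
    unfolding Jl_def traj_def by (simp only: map_bind_pmf e1)
  also have "\<dots> = bind_pmf (init M) (\<lambda>x. bind_pmf (lay M \<pi> 1 x (l - 1)) (\<lambda>z. map_pmf (Pair z) (trans M (1 + (l - 1)) (fst z) (snd z))))"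
    by (simp only: gj)
  also have "\<dots> = bind_pmf (Dl M \<pi> H l) (\<lambda>z. map_pmf (Pair z) (trans M l (fst z) (snd z)))"
    using l by (simp add: Dl_eq bind_assoc_pmf)
  finally show ?thesis .
qed

lemma init_eq: "0 < H \<Longrightarrow> map_pmf (\<lambda>\<tau>. fst (\<tau> ! 0)) (traj M \<pi> H) = init M"
proof -
  assume H: "0 < H"
  have "map_pmf (\<lambda>\<tau>. fst (\<tau> ! 0)) (traj M \<pi> H) = map_pmf fst (Dl M \<pi> H 1)"
    unfolding Dl_def by (simp add: map_pmf_comp)
  also have "\<dots> = init M" using H by (simp add: Dl_eq map_bind_pmf map_pmf_comp bind_return_pmf')
  finally show ?thesis .
qed

lemma hell2_init_le: "0 < H \<Longrightarrow> hell2 (init M1) (init M2) \<le> hell2 (traj M1 \<pi> H) (traj M2 \<pi> H)"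
  using hell2_map_mono[of "\<lambda>\<tau>. fst (\<tau> ! 0)" "traj M1 \<pi> H" "traj M2 \<pi> H"] by (simp add: init_eq)

lemma pw_cover:
  fixes a b s l e :: real
  assumes a: "0 \<le> a" and b: "0 \<le> b" and s: "0 \<le> s" "s \<le> 1" and l: "0 < l" and e: "0 < e"
  shows "a * s \<le> l/2 * (a * (a / (b + e * a))) + 1/(2*l) * (b * s^2) + e/(2*l) * (a * s)"
proof (cases "a = 0")
  case True then show ?thesis using b l by simp
next
  case False
  then have a': "0 < a" using a by simp
  define u where "u = b + e * a"
  have u: "0 < u" using a' b e by (simp add: u_def add_nonneg_pos)
  have key: "l/2 * (a * (a / u)) + 1/(2*l) * (u * s^2) - a * s = (l * a - u * s)^2 / (2 * l * u)"
    using u l by (simp add: field_simps power2_eq_square)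
  have "0 \<le> (l * a - u * s)^2 / (2 * l * u)" using u l by simp
  then have 1: "a * s \<le> l/2 * (a * (a / u)) + 1/(2*l) * (u * s^2)" using key by linarith
  have "s^2 \<le> s" using s by (simp add: power2_eq_square mult_left_le)
  then have "u * s^2 \<le> b * s^2 + e * a * s" unfolding u_def using a e
    by (simp add: distrib_right mult_left_mono)
  then have "1/(2*l) * (u * s^2) \<le> 1/(2*l) * (b * s^2 + e * a * s)" using l by (intro mult_left_mono) auto
  also have "\<dots> = 1/(2*l) * (b * s^2) + e/(2*l) * (a * s)" by (simp add: field_simps add_divide_distrib)
  finally show ?thesis using 1 unfolding u_def by linarith
qed

lemma isum_lin3:
  assumes "asum f1" "asum f2" "asum f3"
  shows "infsetsum (\<lambda>x. c1 * f1 x + c2 * f2 x + c3 * f3 x) UNIV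
    = c1 * infsetsum f1 UNIV + c2 * infsetsum f2 UNIV + c3 * infsetsum f3 UNIV"
  using assms by (simp add: infsetsum_add abs_summable_on_add abs_summable_on_cmult_right infsetsum_cmult_right)

lemma ratio_bounds:
  fixes a b e :: real
  assumes "0 \<le> a" "0 \<le> b" "0 < e"
  shows "0 \<le> a / (b + e * a)" "a / (b + e * a) \<le> 1 / e"
proof -
  show "0 \<le> a / (b + e * a)" using assms by simp
  show "a / (b + e * a) \<le> 1 / e"
  proof (cases "a = 0")
    case False
    then have "0 < b + e * a" using assms by (simp add: add_nonneg_pos)
    then show ?thesis using assms by (simp add: field_simps)
  qed (use assms in simp)
qed

lemma cover_lambda:
  fixes A Bm :: "'z pmf" and s :: "'z \<Rightarrow> real"
  assumes s0: "\<And>z. 0 \<le> s z" and s1: "\<And>z. s z \<le> 1" and l: "0 < l" and e: "0 < e"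
  shows "EE A s \<le> l/2 * EE A (\<lambda>z. pmf A z / (pmf Bm z + e * pmf A z))
            + 1/(2*l) * EE Bm (\<lambda>z. (s z)^2) + e/(2*l) * EE A s"
proof -
  let ?r = "\<lambda>z. pmf A z / (pmf Bm z + e * pmf A z)"
  have rb: "\<bar>?r z\<bar> \<le> 1/e" for z using ratio_bounds[of "pmf A z" "pmf Bm z" e] e by simp
  have sb: "\<bar>s z\<bar> \<le> 1" for z using s0[of z] s1[of z] by simp
  have s2b: "\<bar>(s z)^2\<bar> \<le> 1" for z using s0[of z] s1[of z] by (simp add: power_le_one)
  have a1: "asum (\<lambda>z. pmf A z * ?r z)" by (rule asum_pmf_bounded[OF rb])
  have a2: "asum (\<lambda>z. pmf Bm z * (s z)^2)" by (rule asum_pmf_bounded[OF s2b])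
  have a3: "asum (\<lambda>z. pmf A z * s z)" by (rule asum_pmf_bounded[OF sb])
  have "infsetsum (\<lambda>z. pmf A z * s z) UNIV \<le>
      infsetsum (\<lambda>z. l/2 * (pmf A z * ?r z) + 1/(2*l) * (pmf Bm z * (s z)^2) + e/(2*l) * (pmf A z * s z)) UNIV"
  proof (rule infsetsum_mono[OF a3])
    show "asum (\<lambda>z. l/2 * (pmf A z * ?r z) + 1/(2*l) * (pmf Bm z * (s z)^2) + e/(2*l) * (pmf A z * s z))"
      by (intro abs_summable_on_add abs_summable_on_cmult_right a1 a2 a3)
    fix z
    show "pmf A z * s z \<le> l/2 * (pmf A z * ?r z) + 1/(2*l) * (pmf Bm z * (s z)^2) + e/(2*l) * (pmf A z * s z)"
      by (rule pw_cover) (use s0 s1 l e in auto)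
  qed
  also have "\<dots> = l/2 * infsetsum (\<lambda>z. pmf A z * ?r z) UNIV + 1/(2*l) * infsetsum (\<lambda>z. pmf Bm z * (s z)^2) UNIV
      + e/(2*l) * infsetsum (\<lambda>z. pmf A z * s z) UNIV"
    by (rule isum_lin3[OF a1 a2 a3])
  finally show ?thesis by (simp only: pmf_expectation_eq_infsetsum)
qed

lemma cover_bound:
  fixes A Bm :: "'z pmf" and s :: "'z \<Rightarrow> real"
  assumes s0: "\<And>z. 0 \<le> s z" and s1: "\<And>z. s z \<le> 1" and e: "0 < e" and C: "0 < C"
    and psi: "EE A (\<lambda>z. pmf A z / (pmf Bm z + e * pmf A z)) \<le> C"
  shows "EE A s \<le> 2 * sqrt (C * EE Bm (\<lambda>z. (s z)^2)) + 2 * e * C"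
proof -
  define X where "X = EE A s"
  define Y where "Y = EE Bm (\<lambda>z. (s z)^2)"
  define P where "P = EE A (\<lambda>z. pmf A z / (pmf Bm z + e * pmf A z))"
  have X0: "0 \<le> X" unfolding X_def by (rule EE_01[where B=1, OF s0 s1])
  have Y0: "0 \<le> Y" unfolding Y_def by (simp add: integral_nonneg_AE)
  have gen: "X \<le> l/2 * C + 1/(2*l) * Y + e/(2*l) * X" if l: "0 < l" for l
  proof -
    have "X \<le> l/2 * P + 1/(2*l) * Y + e/(2*l) * X"
      unfolding X_def Y_def P_def by (rule cover_lambda[OF s0 s1 l e])
    moreover have "l/2 * P \<le> l/2 * C" using psi l unfolding P_def by simp
    ultimately show ?thesis by linarith
  qed
  show ?thesis
  proof (cases "e * C \<le> sqrt (C * Y)")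
    case True
    define r where "r = sqrt (C * Y)"
    have r: "0 < r" using True e C unfolding r_def by (metis mult_pos_pos order_less_le_trans)
    have r2: "r * r = C * Y" unfolding r_def using C Y0 by simp
    define l where "l = r / C"
    have l: "0 < l" using r C by (simp add: l_def)
    have g: "X \<le> l/2 * C + 1/(2*l) * Y + e/(2*l) * X" by (rule gen[OF l])
    have t1: "l/2 * C = r/2" using C by (simp add: l_def)
    have t2: "1/(2*l) * Y = r/2" using C r r2 by (simp add: l_def field_simps)
    have t3: "e/(2*l) \<le> 1/2" using True C r by (simp add: l_def r_def[symmetric] field_simps)
    have "e/(2*l) * X \<le> 1/2 * X" by (rule mult_right_mono[OF t3 X0])
    then have "X \<le> r/2 + r/2 + 1/2 * X" using g t1 t2 by linarith
    then have "X \<le> 2 * r" by linarith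
    moreover have "0 \<le> 2 * e * C" using e C by simp
    ultimately show ?thesis unfolding r_def X_def Y_def by linarith
  next
    case False
    have g: "X \<le> e/2 * C + 1/(2*e) * Y + e/(2*e) * X" by (rule gen[OF e])
    have "sqrt (C * Y) < e * C" using False by simp
    moreover have cy: "0 \<le> C * Y" using C Y0 by simp
    ultimately have "(sqrt (C * Y))^2 < (e * C)^2" by (intro power_strict_mono) auto
    then have "C * Y < (e * C)^2" using cy by simp
    then have "Y < e^2 * C" using C by (simp add: power2_eq_square field_simps)
    then have "1/(2*e) * Y \<le> e/2 * C" using e by (simp add: field_simps power2_eq_square)
    moreover have "e/(2*e) * X = X / 2" using e by simp
    ultimately have "X \<le> 2 * e * C" using g by linarith
    moreover have "0 \<le> 2 * sqrt (C * Y)" using cy by simp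
    ultimately show ?thesis unfolding X_def Y_def by linarith
  qed
qed

lemma F_mono_lip:
  fixes x y b e :: real
  assumes y: "0 \<le> y" and xy: "y \<le> x" and b: "0 \<le> b" and e: "0 < e"
  shows "y * (y / (b + e * y)) \<le> x * (x / (b + e * x))"
    and "x * (x / (b + e * x)) - y * (y / (b + e * y)) \<le> 2/e * (x - y)"
proof -
  have x: "0 \<le> x" using y xy by linarith
  have "y * (y / (b + e * y)) \<le> x * (x / (b + e * x)) \<and>
        x * (x / (b + e * x)) - y * (y / (b + e * y)) \<le> 2/e * (x - y)"
  proof (cases "y = 0")
    case True
    have f0: "0 \<le> x * (x / (b + e * x))" using x b e by simp
    have "x / (b + e * x) \<le> 1 / e" by (rule ratio_bounds(2)[OF x b e])
    then have "x * (x / (b + e * x)) \<le> x * (1 / e)" by (rule mult_left_mono[OF _ x])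
    moreover have "x * (1/e) \<le> 2/e * x" using x e by (simp add: field_simps)
    ultimately show ?thesis using True f0 by simp
  next
    case False
    then have y': "0 < y" using y by simp
    then have x': "0 < x" using xy by linarith
    define ux uy where "ux = b + e * x" and "uy = b + e * y"
    have ux: "0 < ux" and uy: "0 < uy" using b e x' y' by (simp_all add: ux_def uy_def add_nonneg_pos)
    define N where "N = b * (x + y) + e * x * y"
    have N: "0 \<le> N" using b e x y by (simp add: N_def)
    have eq: "x * (x / ux) - y * (y / uy) = (x - y) * (N / (ux * uy))"
      using ux uy by (simp add: N_def ux_def uy_def field_simps power2_eq_square)
    have Nle: "N / (ux * uy) \<le> 2 / e"
    proof -
      have "2 * (ux * uy) - e * N = 2 * b^2 + e * b * (x + y) + e^2 * x * y"
        by (simp add: N_def ux_def uy_def power2_eq_square algebra_simps)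
      also have "\<dots> \<ge> 0" using b e x y by simp
      finally have "e * N \<le> 2 * (ux * uy)" by simp
      then show ?thesis using ux uy e by (simp add: field_simps)
    qed
    have d: "0 \<le> x - y" using xy by simp
    have "0 \<le> (x - y) * (N / (ux * uy))" using d N ux uy by simp
    moreover have "(x - y) * (N / (ux * uy)) \<le> (x - y) * (2 / e)" by (rule mult_left_mono[OF Nle d])
    ultimately show ?thesis using eq unfolding ux_def uy_def by (simp add: mult.commute)
  qed
  then show "y * (y / (b + e * y)) \<le> x * (x / (b + e * x))"
    and "x * (x / (b + e * x)) - y * (y / (b + e * y)) \<le> 2/e * (x - y)" by simp_all
qed

lemma pw_lip:
  fixes x y b e :: real
  assumes "0 \<le> x" "0 \<le> y" "0 \<le> b" "0 < e"
  shows "x * (x / (b + e * x)) + 2/e * (y * (if y < x then 1 else 0))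
       \<le> y * (y / (b + e * y)) + 2/e * (x * (if y < x then 1 else 0))"
proof (cases "y < x")
  case True
  have h: "x * (x / (b + e * x)) - y * (y / (b + e * y)) \<le> 2/e * (x - y)"
    by (rule F_mono_lip(2)) (use True assms in auto)
  have "2/e * (x - y) = 2/e * x - 2/e * y" by (rule right_diff_distrib)
  then have "x * (x / (b + e * x)) + 2/e * y \<le> y * (y / (b + e * y)) + 2/e * x" using h by linarith
  then show ?thesis using True by simp
next
  case False
  then show ?thesis using F_mono_lip(1)[of x y b e] assms by simp
qed

lemma pw_den:
  fixes a b c e :: real
  assumes a: "0 \<le> a" and b: "0 \<le> b" and c: "0 \<le> c" and e: "0 < e"
  shows "a * (a / (b + e * a)) \<le> 2 * (a * (a / (c + e * a))) + 2/e^2 * (sqrt c - sqrt b)^2"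
proof (cases "a = 0")
  case True then show ?thesis by simp
next
  case False
  then have a': "0 < a" using a by simp
  define u v d where "u = b + e * a" and "v = c + e * a" and "d = (sqrt c - sqrt b)^2"
  have u: "e * a \<le> u" and v: "e * a \<le> v" using b c by (simp_all add: u_def v_def)
  have ea: "0 < e * a" using e a' by simp
  have u0: "0 < u" and v0: "0 < v" using u v ea by linarith+
  have d0: "0 \<le> d" by (simp add: d_def)
  have cb: "c \<le> 2 * b + 2 * d"
  proof -
    have "0 \<le> (sqrt c - 2 * sqrt b)^2" by simp
    moreover have "(sqrt c - 2 * sqrt b)^2 = c - 4 * (sqrt c * sqrt b) + 4 * b"
      using b c by (simp add: power2_eq_square algebra_simps)
    moreover have "d = c - 2 * (sqrt c * sqrt b) + b"
      using b c by (simp add: d_def power2_eq_square algebra_simps)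
    ultimately show ?thesis by linarith
  qed
  have "v - 2 * u = c - 2 * b - e * a" by (simp add: u_def v_def algebra_simps)
  then have vu: "v - 2 * u \<le> 2 * d" using cb ea by linarith
  define W where "W = a^2 / (u * v)"
  have W0: "0 \<le> W" using u0 v0 by (simp add: W_def)
  have W1: "W \<le> 1 / e^2"
  proof -
    have "(e * a) * (e * a) \<le> u * v" by (rule mult_mono[OF u v]) (use ea v0 u0 in auto)
    then show ?thesis using u0 v0 e unfolding W_def by (simp add: field_simps power2_eq_square)
  qed
  have eq: "a * (a / u) - 2 * (a * (a / v)) = W * (v - 2 * u)"
    using u0 v0 by (simp add: W_def field_simps power2_eq_square)
  have "W * (v - 2 * u) \<le> W * (2 * d)" by (rule mult_left_mono[OF vu W0])
  also have "\<dots> \<le> 1/e^2 * (2 * d)" by (rule mult_right_mono[OF W1]) (use d0 in simp)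
  finally have "a * (a / u) - 2 * (a * (a / v)) \<le> 2/e^2 * d" using eq by simp
  then show ?thesis unfolding u_def v_def d_def by simp
qed

lemma lip_sum:
  fixes A A' :: "'z pmf" and b :: "'z \<Rightarrow> real"
  assumes b: "\<And>z. 0 \<le> b z" and e: "0 < e"
  defines "g \<equiv> \<lambda>z. if pmf A' z < pmf A z then 1 else (0::real)"
  shows "EE A (\<lambda>z. pmf A z / (b z + e * pmf A z)) + 2/e * EE A' g
       \<le> EE A' (\<lambda>z. pmf A' z / (b z + e * pmf A' z)) + 2/e * EE A g"
proof -
  have rb: "\<bar>pmf Q z / (b z + e * pmf Q z)\<bar> \<le> 1/e" for Q z using ratio_bounds[of "pmf Q z" "b z" e] b[of z] e by simp
  have gb: "\<bar>g z\<bar> \<le> 1" for z by (simp add: g_def)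
  have a1: "asum (\<lambda>z. pmf Q z * (pmf Q z / (b z + e * pmf Q z)))" for Q by (rule asum_pmf_bounded[OF rb])
  have a2: "asum (\<lambda>z. pmf Q z * g z)" for Q by (rule asum_pmf_bounded[OF gb])
  have "infsetsum (\<lambda>z. pmf A z * (pmf A z / (b z + e * pmf A z)) + 2/e * (pmf A' z * g z)) UNIV
     \<le> infsetsum (\<lambda>z. pmf A' z * (pmf A' z / (b z + e * pmf A' z)) + 2/e * (pmf A z * g z)) UNIV"
  proof (rule infsetsum_mono)
    show "asum (\<lambda>z. pmf A z * (pmf A z / (b z + e * pmf A z)) + 2/e * (pmf A' z * g z))"
      by (intro abs_summable_on_add abs_summable_on_cmult_right a1 a2)
    show "asum (\<lambda>z. pmf A' z * (pmf A' z / (b z + e * pmf A' z)) + 2/e * (pmf A z * g z))"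
      by (intro abs_summable_on_add abs_summable_on_cmult_right a1 a2)
    fix z
    show "pmf A z * (pmf A z / (b z + e * pmf A z)) + 2/e * (pmf A' z * g z)
        \<le> pmf A' z * (pmf A' z / (b z + e * pmf A' z)) + 2/e * (pmf A z * g z)"
      unfolding g_def by (rule pw_lip) (use b e in auto)
  qed
  then show ?thesis
    by (simp only: isum_lin2[OF a1 a2] pmf_expectation_eq_infsetsum)
qed

lemma den_sum:
  fixes A B B' :: "'z pmf"
  assumes e: "0 < e"
  shows "EE A (\<lambda>z. pmf A z / (pmf B z + e * pmf A z))
       \<le> 2 * EE A (\<lambda>z. pmf A z / (pmf B' z + e * pmf A z)) + 2/e^2 * hell2 B' B"
proof -
  have rb: "\<bar>pmf A z / (pmf Q z + e * pmf A z)\<bar> \<le> 1/e" for Q z using ratio_bounds[of "pmf A z" "pmf Q z" e] e by simp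
  have a1: "asum (\<lambda>z. pmf A z * (pmf A z / (pmf Q z + e * pmf A z)))" for Q by (rule asum_pmf_bounded[OF rb])
  have "infsetsum (\<lambda>z. pmf A z * (pmf A z / (pmf B z + e * pmf A z))) UNIV
     \<le> infsetsum (\<lambda>z. 2 * (pmf A z * (pmf A z / (pmf B' z + e * pmf A z))) + 2/e^2 * (sqrt (pmf B' z) - sqrt (pmf B z))^2) UNIV"
  proof (rule infsetsum_mono[OF a1])
    show "asum (\<lambda>z. 2 * (pmf A z * (pmf A z / (pmf B' z + e * pmf A z))) + 2/e^2 * (sqrt (pmf B' z) - sqrt (pmf B z))^2)"
      by (intro abs_summable_on_add abs_summable_on_cmult_right a1 asum_sq)
    fix z
    show "pmf A z * (pmf A z / (pmf B z + e * pmf A z))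
      \<le> 2 * (pmf A z * (pmf A z / (pmf B' z + e * pmf A z))) + 2/e^2 * (sqrt (pmf B' z) - sqrt (pmf B z))^2"
      by (rule pw_den) (use e in auto)
  qed
  also have "\<dots> = 2 * infsetsum (\<lambda>z. pmf A z * (pmf A z / (pmf B' z + e * pmf A z))) UNIV
      + 2/e^2 * infsetsum (\<lambda>z. (sqrt (pmf B' z) - sqrt (pmf B z))^2) UNIV"
    by (simp only: infsetsum_add[OF asum_c[OF a1] asum_c[OF asum_sq]] isum_c[OF a1] isum_c[OF asum_sq])
  finally show ?thesis by (simp only: pmf_expectation_eq_infsetsum hell2_isum)
qed

lemma hell2_traj_bounds: "0 \<le> hell2 (traj M1 \<pi> H) (traj M2 \<pi> H)" "hell2 (traj M1 \<pi> H) (traj M2 \<pi> H) \<le> 2"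
  by (simp_all add: hell2_ge0 hell2_le2)

lemma EE_hell2_mono:
  assumes "\<And>\<pi>. hell2 (F \<pi>) (G \<pi>) \<le> hell2 (F' \<pi>) (G' \<pi>)"
  shows "EE p (\<lambda>\<pi>. hell2 (F \<pi>) (G \<pi>)) \<le> EE p (\<lambda>\<pi>. hell2 (F' \<pi>) (G' \<pi>))"
  by (rule EE_mono[where B=2]) (use assms in \<open>auto simp: hell2_ge0 hell2_le2\<close>)

lemma hell2_Dm: "hell2 (Dm M1 p H l) (Dm M2 p H l) \<le> EE p (\<lambda>\<pi>. hell2 (traj M1 \<pi> H) (traj M2 \<pi> H))"
proof -
  have "hell2 (Dm M1 p H l) (Dm M2 p H l) \<le> EE p (\<lambda>\<pi>. hell2 (Dl M1 \<pi> H l) (Dl M2 \<pi> H l))"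
    unfolding Dm_def by (rule hell2_bind_mono)
  also have "\<dots> \<le> EE p (\<lambda>\<pi>. hell2 (traj M1 \<pi> H) (traj M2 \<pi> H))"
    by (rule EE_hell2_mono) (simp add: Dl_def hell2_map_mono)
  finally show ?thesis .
qed

lemma chain_Dm:
  assumes l: "1 \<le> l" "l < H"
  shows "EE (Dm M1 p H l) (\<lambda>z. hell2 (trans M1 l (fst z) (snd z)) (trans M2 l (fst z) (snd z)))
     \<le> 4 * EE p (\<lambda>\<pi>. hell2 (traj M1 \<pi> H) (traj M2 \<pi> H))"
proof -
  let ?E = "EE p (\<lambda>\<pi>. hell2 (traj M1 \<pi> H) (traj M2 \<pi> H))"
  have J: "bind_pmf (Dm M p H l) (\<lambda>z. map_pmf (Pair z) (trans M l (fst z) (snd z))) = bind_pmf p (\<lambda>\<pi>. Jl M \<pi> H l)" for M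
    unfolding Dm_def by (simp add: bind_assoc_pmf Jl_eq[OF l])
  have "EE (Dm M1 p H l) (\<lambda>z. hell2 (trans M1 l (fst z) (snd z)) (trans M2 l (fst z) (snd z)))
     \<le> 2 * hell2 (bind_pmf (Dm M1 p H l) (\<lambda>z. map_pmf (Pair z) (trans M1 l (fst z) (snd z))))
                 (bind_pmf (Dm M2 p H l) (\<lambda>z. map_pmf (Pair z) (trans M2 l (fst z) (snd z))))
       + 2 * hell2 (Dm M1 p H l) (Dm M2 p H l)"
    by (rule chain_ineq)
  also have "hell2 (bind_pmf (Dm M1 p H l) (\<lambda>z. map_pmf (Pair z) (trans M1 l (fst z) (snd z))))
                 (bind_pmf (Dm M2 p H l) (\<lambda>z. map_pmf (Pair z) (trans M2 l (fst z) (snd z)))) \<le> ?E"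
  proof -
    have "hell2 (bind_pmf p (\<lambda>\<pi>. Jl M1 \<pi> H l)) (bind_pmf p (\<lambda>\<pi>. Jl M2 \<pi> H l))
        \<le> EE p (\<lambda>\<pi>. hell2 (Jl M1 \<pi> H l) (Jl M2 \<pi> H l))" by (rule hell2_bind_mono)
    also have "\<dots> \<le> ?E" by (rule EE_hell2_mono) (simp add: Jl_def hell2_map_mono)
    finally show ?thesis by (simp only: J)
  qed
  also have "hell2 (Dm M1 p H l) (Dm M2 p H l) \<le> ?E" by (rule hell2_Dm)
  finally show ?thesis by simp
qed

lemma EE_unif_le:
  fixes f :: "'b \<Rightarrow> real"
  assumes f0: "\<And>y. 0 \<le> f y" and f2: "\<And>y. f y \<le> 2" and H: "0 < H" and l: "l \<in> {1..H}"
  shows "EE (p l) f \<le> real H * EE (bind_pmf (pmf_of_set {1..H}) p) f"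
proof -
  have ne: "{1..H} \<noteq> {}" using H by simp
  have "EE (bind_pmf (pmf_of_set {1..H}) p) f = EE (pmf_of_set {1..H}) (\<lambda>l. EE (p l) f)"
    by (rule integral_bind_pmf_nn[OF f0 f2])
  also have "\<dots> = (\<Sum>l\<in>{1..H}. EE (p l) f) / real H"
    using ne by (simp add: integral_pmf_of_set)
  finally have eq: "real H * EE (bind_pmf (pmf_of_set {1..H}) p) f = (\<Sum>l\<in>{1..H}. EE (p l) f)"
    using H by simp
  have "EE (p l) f \<le> (\<Sum>l\<in>{1..H}. EE (p l) f)"
    by (rule member_le_sum) (use l f0 in \<open>auto intro: integral_nonneg_AE\<close>)
  then show ?thesis using eq by simp
qed

lemma sim_D:
  fixes g :: "'x \<times> 'a \<Rightarrow> real"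
  assumes g0: "\<And>z. 0 \<le> g z" and g1: "\<And>z. g z \<le> 1" and h: "1 \<le> h" "h \<le> H"
  shows "EE (Dl M1 \<pi> H h) g \<le> EE (Dl M2 \<pi> H h) g + min 1 (sqrt (hell2 (init M1) (init M2)))
          + (\<Sum>j<h-1. EE (Dl M2 \<pi> H (Suc j)) (smis M1 M2 (Suc j)))"
proof -
  define V1 where "V1 x = EE (lay M1 \<pi> 1 x (h - 1)) g" for x
  define V2 where "V2 x = EE (lay M2 \<pi> 1 x (h - 1)) g" for x
  define W where "W x = (\<Sum>j<h-1. EE (lay M2 \<pi> 1 x j) (smis M1 M2 (1 + j)))" for x
  have V1b: "0 \<le> V1 x" "V1 x \<le> 1" for x unfolding V1_def by (rule EE_01[where f=g and B=1, OF g0 g1])+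
  have V2b: "0 \<le> V2 x" "V2 x \<le> 1" for x unfolding V2_def by (rule EE_01[where f=g and B=1, OF g0 g1])+
  have t: "0 \<le> EE (lay M2 \<pi> 1 x j) (smis M1 M2 (1 + j))" "EE (lay M2 \<pi> 1 x j) (smis M1 M2 (1 + j)) \<le> 1" for x j
    by (rule EE_01[where f="smis M1 M2 (1 + j)" and B=1, OF smis01(1) smis01(2)])+
  have Wb: "0 \<le> W x" "W x \<le> real (h - 1)" for x
  proof -
    show "0 \<le> W x" unfolding W_def by (rule sum_nonneg) (use t in auto)
    have "W x \<le> (\<Sum>j<h-1. 1)" unfolding W_def by (rule sum_mono) (use t in auto)
    then show "W x \<le> real (h - 1)" by simp
  qed
  have IH: "V1 x \<le> V2 x + W x" for x unfolding V1_def V2_def W_def by (rule sim_lay[OF g0 g1])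
  have L1: "EE (Dl M1 \<pi> H h) g = EE (init M1) V1"
    unfolding V1_def Dl_eq[OF h] by (rule integral_bind_pmf_nn[OF g0 g1])
  have L2: "EE (Dl M2 \<pi> H h) g = EE (init M2) V2"
    unfolding V2_def Dl_eq[OF h] by (rule integral_bind_pmf_nn[OF g0 g1])
  have "EE (init M1) V1 \<le> EE (init M2) V1 + min 1 (sqrt (hell2 (init M1) (init M2)))"
    by (rule cm_min[where V=V1, OF V1b])
  also have "EE (init M2) V1 \<le> EE (init M2) (\<lambda>x. V2 x + W x)"
  proof (rule EE_mono[where B="1 + real (h - 1)"])
    fix y
    show "\<bar>V1 y\<bar> \<le> 1 + real (h - 1)" using V1b[of y] by simp
    show "\<bar>V2 y + W y\<bar> \<le> 1 + real (h - 1)" using V2b[of y] Wb[of y] by simp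
    show "V1 y \<le> V2 y + W y" by (rule IH)
  qed
  also have "EE (init M2) (\<lambda>x. V2 x + W x) = EE (init M2) V2 + EE (init M2) W"
  proof (rule EE_add[where B="1 + real (h - 1)"])
    fix y
    show "\<bar>V2 y\<bar> \<le> 1 + real (h - 1)" using V2b[of y] by simp
    show "\<bar>W y\<bar> \<le> 1 + real (h - 1)" using Wb[of y] by simp
  qed
  also have "EE (init M2) W = (\<Sum>j<h-1. EE (Dl M2 \<pi> H (Suc j)) (smis M1 M2 (Suc j)))"
  proof -
    have "EE (init M2) W = (\<Sum>j<h-1. EE (init M2) (\<lambda>x. EE (lay M2 \<pi> 1 x j) (smis M1 M2 (1 + j))))"
      unfolding W_def by (rule EE_sum[where B=1]) (use t in \<open>simp add: abs_le_iff\<close>)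
    also have "\<dots> = (\<Sum>j<h-1. EE (Dl M2 \<pi> H (Suc j)) (smis M1 M2 (Suc j)))"
    proof (rule sum.cong)
      fix j assume j: "j \<in> {..<h-1}"
      have "Dl M2 \<pi> H (Suc j) = bind_pmf (init M2) (\<lambda>x. lay M2 \<pi> 1 x j)"
        using Dl_eq[of "Suc j" H M2 \<pi>] j h by simp
      then show "EE (init M2) (\<lambda>x. EE (lay M2 \<pi> 1 x j) (smis M1 M2 (1 + j))) = EE (Dl M2 \<pi> H (Suc j)) (smis M1 M2 (Suc j))"
        using integral_bind_pmf_nn[where f="smis M1 M2 (Suc j)" and B=1 and M="init M2" and N="\<lambda>x. lay M2 \<pi> 1 x j", OF smis01(1) smis01(2)]
        by simp
    qed simp
    finally show ?thesis .
  qed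
  finally show ?thesis using L1 L2 by simp
qed

definition PsiT :: "('x, 'a) mdp \<Rightarrow> ('x, 'a) policy \<Rightarrow> ('x, 'a) policy pmf \<Rightarrow> nat \<Rightarrow> nat \<Rightarrow> real \<Rightarrow> real" where
  "PsiT M \<pi> p H l e = EE (Dl M \<pi> H l) (\<lambda>z. pmf (Dl M \<pi> H l) z / (pmf (Dm M p H l) z + e * pmf (Dl M \<pi> H l) z))"

lemma smis_sq: "(smis M1 M2 l z)^2 \<le> hell2 (trans M2 l (fst z) (snd z)) (trans M1 l (fst z) (snd z))"
proof -
  let ?h = "hell2 (trans M1 l (fst z) (snd z)) (trans M2 l (fst z) (snd z))"
  have h0: "0 \<le> ?h" by (rule hell2_ge0)
  have "smis M1 M2 l z \<le> sqrt ?h" by (simp add: smis_def)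
  moreover have "0 \<le> smis M1 M2 l z" by (rule smis01)
  ultimately have "(smis M1 M2 l z)^2 \<le> (sqrt ?h)^2" by (rule power_mono)
  then show ?thesis using h0 by (simp add: hell2_sym)
qed

lemma EE_ge_const:
  fixes f :: "'b \<Rightarrow> real"
  assumes "\<And>y. c \<le> f y" "\<And>y. f y \<le> B" "0 \<le> c"
  shows "c \<le> EE P f"
proof -
  have "EE P (\<lambda>_. c) \<le> EE P f"
  proof (rule EE_mono[where B=B])
    fix y
    have "c \<le> f y" "f y \<le> B" by (rule assms)+
    then show "\<bar>c\<bar> \<le> B" "\<bar>f y\<bar> \<le> B" "c \<le> f y" using assms(3) by auto
  qed
  then show ?thesis by simp
qed

lemma per_t:
  fixes Ms Mh :: "('x, 'a) mdp" and p :: "nat \<Rightarrow> ('x, 'a) policy pmf"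
  assumes h: "1 \<le> h" "h \<le> H" and e: "0 < e" and C: "1 \<le> C"
    and cov: "\<And>l. l \<in> {1..H} \<Longrightarrow> PsiT Mh \<pi> (p l) H l e \<le> C"
  defines "Dt \<equiv> EE (bind_pmf (pmf_of_set {1..H}) p) (\<lambda>\<pi>'. hell2 (traj Mh \<pi>' H) (traj Ms \<pi>' H))"
  shows "PsiT Ms \<pi> (p h) H h e \<le> 4 * H * C + 2 * H * Dt / e^2 + 8 / e * sqrt (H^3 * C * Dt)"
proof -
  have H: "0 < H" using h by simp
  have Dt0: "0 \<le> Dt" unfolding Dt_def by (simp add: integral_nonneg_AE hell2_ge0)
  have Ep: "EE (p l) (\<lambda>\<pi>'. hell2 (traj Mh \<pi>' H) (traj Ms \<pi>' H)) \<le> real H * Dt" if "l \<in> {1..H}" for l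
    unfolding Dt_def by (rule EE_unif_le[OF hell2_traj_bounds H that])
  define A where "A = Dl Ms \<pi> H h"
  define A' where "A' = Dl Mh \<pi> H h"
  define g where "g = (\<lambda>z. if pmf A' z < pmf A z then 1 else (0::real))"
  have g0: "0 \<le> g z" and g1: "g z \<le> 1" for z by (simp_all add: g_def)
  define Phi' where "Phi' = EE A' (\<lambda>z. pmf A' z / (pmf (Dm Ms (p h) H h) z + e * pmf A' z))"
  have S1: "PsiT Ms \<pi> (p h) H h e + 2/e * EE A' g \<le> Phi' + 2/e * EE A g"
    unfolding PsiT_def Phi'_def A_def[symmetric] g_def
    by (rule lip_sum) (use e in auto)
  have S2: "Phi' \<le> 2 * C + 2/e^2 * (real H * Dt)"
  proof -
    have "Phi' \<le> 2 * PsiT Mh \<pi> (p h) H h e + 2/e^2 * hell2 (Dm Mh (p h) H h) (Dm Ms (p h) H h)"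
      unfolding Phi'_def PsiT_def A'_def by (rule den_sum[OF e])
    moreover have "PsiT Mh \<pi> (p h) H h e \<le> C" using cov h by simp
    moreover have "hell2 (Dm Mh (p h) H h) (Dm Ms (p h) H h) \<le> real H * Dt"
      using hell2_Dm[of Mh "p h" H h Ms] Ep[of h] h by simp
    moreover have "0 \<le> 2/e^2" using e by simp
    ultimately show ?thesis by (smt (verit) mult_left_mono)
  qed
  have S3: "EE A g \<le> EE A' g + min 1 (sqrt (hell2 (init Ms) (init Mh)))
          + (\<Sum>j<h-1. EE (Dl Mh \<pi> H (Suc j)) (smis Ms Mh (Suc j)))"
    unfolding A_def A'_def by (rule sim_D[OF g0 g1 h])
  define s where "s = sqrt (C * H * Dt)"
  have s0: "0 \<le> s" using C Dt0 by (simp add: s_def)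
  have S4: "EE (Dl Mh \<pi> H (Suc j)) (smis Ms Mh (Suc j)) \<le> 4 * s + 2 * e * C" if j: "j < h - 1" for j
  proof -
    define l where "l = Suc j"
    have l: "1 \<le> l" "l < H" "l \<in> {1..H}" using j h by (auto simp: l_def)
    define Y where "Y = EE (Dm Mh (p l) H l) (\<lambda>z. (smis Ms Mh l z)^2)"
    have X: "EE (Dl Mh \<pi> H l) (smis Ms Mh l) \<le> 2 * sqrt (C * Y) + 2 * e * C"
      unfolding Y_def
      by (rule cover_bound[OF smis01(1) smis01(2) e]) (use C cov[OF l(3)] in \<open>auto simp: PsiT_def\<close>)
    have "Y \<le> EE (Dm Mh (p l) H l) (\<lambda>z. hell2 (trans Mh l (fst z) (snd z)) (trans Ms l (fst z) (snd z)))"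
      unfolding Y_def
    proof (rule EE_mono[where B=2])
      fix z
      have "(smis Ms Mh l z)^2 \<le> 1" by (rule power_le_one[OF smis01(1) smis01(2)])
      moreover have "0 \<le> (smis Ms Mh l z)^2" by simp
      ultimately show "\<bar>(smis Ms Mh l z)^2\<bar> \<le> 2" by simp
      show "\<bar>hell2 (trans Mh l (fst z) (snd z)) (trans Ms l (fst z) (snd z))\<bar> \<le> 2"
        using hell2_ge0[of "trans Mh l (fst z) (snd z)" "trans Ms l (fst z) (snd z)"]
          hell2_le2[of "trans Mh l (fst z) (snd z)" "trans Ms l (fst z) (snd z)"] by simp
      show "(smis Ms Mh l z)^2 \<le> hell2 (trans Mh l (fst z) (snd z)) (trans Ms l (fst z) (snd z))" by (rule smis_sq)
    qed
    also have "\<dots> \<le> 4 * EE (p l) (\<lambda>\<pi>. hell2 (traj Mh \<pi> H) (traj Ms \<pi> H))" by (rule chain_Dm[OF l(1,2)])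
    also have "\<dots> \<le> 4 * (real H * Dt)" using Ep[OF l(3)] by simp
    finally have Y: "Y \<le> 4 * (real H * Dt)" .
    have "sqrt (C * Y) \<le> sqrt (C * (4 * (real H * Dt)))" using Y C by (simp add: mult_left_mono)
    also have "\<dots> = 2 * s" unfolding s_def by (simp add: real_sqrt_mult ac_simps)
    finally show ?thesis using X unfolding l_def by simp
  qed
  have S5: "min 1 (sqrt (hell2 (init Ms) (init Mh))) \<le> sqrt Dt"
  proof -
    have "hell2 (init Ms) (init Mh) \<le> Dt"
      unfolding Dt_def
      by (rule EE_ge_const[where B=2]) (auto simp: hell2_sym[of "init Ms"] hell2_init_le[OF H] hell2_le2 hell2_ge0)
    then have "sqrt (hell2 (init Ms) (init Mh)) \<le> sqrt Dt" by (rule real_sqrt_le_mono)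
    moreover have "min 1 (sqrt (hell2 (init Ms) (init Mh))) \<le> sqrt (hell2 (init Ms) (init Mh))" by (rule min.cobounded2)
    ultimately show ?thesis by linarith
  qed
  have sD: "sqrt Dt \<le> s"
  proof -
    have "1 * 1 \<le> C * real H" using C H by (intro mult_mono) auto
    then have "1 * Dt \<le> (C * real H) * Dt" using Dt0 by (intro mult_right_mono) simp_all
    then show ?thesis unfolding s_def by (simp add: ac_simps)
  qed
  have sum_le: "(\<Sum>j<h-1. EE (Dl Mh \<pi> H (Suc j)) (smis Ms Mh (Suc j))) \<le> real (h - 1) * (4 * s + 2 * e * C)"
  proof -
    have "(\<Sum>j<h-1. EE (Dl Mh \<pi> H (Suc j)) (smis Ms Mh (Suc j))) \<le> (\<Sum>j<h-1. 4 * s + 2 * e * C)"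
      by (rule sum_mono) (use S4 in auto)
    then show ?thesis by simp
  qed
  have main: "PsiT Ms \<pi> (p h) H h e \<le> 2 * C + 2/e^2 * (real H * Dt) + 2/e * (s + real (h - 1) * (4 * s + 2 * e * C))"
  proof -
    have "EE A g - EE A' g \<le> s + real (h - 1) * (4 * s + 2 * e * C)" using S3 S5 sD sum_le by linarith
    then have "2/e * (EE A g - EE A' g) \<le> 2/e * (s + real (h - 1) * (4 * s + 2 * e * C))"
      using e by (intro mult_left_mono) auto
    then show ?thesis using S1 S2 by (simp add: algebra_simps)
  qed
  have hr: "real (h - 1) = real h - 1" using h by simp
  have hH: "real h \<le> real H" using h by simp
  have e1: "2/e * (s + real (h - 1) * (4 * s + 2 * e * C)) = 2/e * s + 8/e * (real h - 1) * s + 4 * (real h - 1) * C"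
    using e unfolding hr by (simp add: field_simps)
  have e2: "sqrt (real H^3 * C * Dt) = real H * s"
  proof -
    have "real H^3 * C * Dt = (real H)^2 * (C * real H * Dt)" by (simp add: power3_eq_cube power2_eq_square)
    then have "sqrt (real H^3 * C * Dt) = sqrt ((real H)^2) * sqrt (C * real H * Dt)" by (metis real_sqrt_mult)
    then show ?thesis unfolding s_def by simp
  qed
  have e3: "2/e^2 * (real H * Dt) = 2 * real H * Dt / e^2" by simp
  have ineq1: "2 * C + 4 * (real h - 1) * C \<le> 4 * real H * C"
  proof -
    have "(4 * real h - 2) * C \<le> (4 * real H) * C" by (rule mult_right_mono) (use hH C in auto)
    moreover have "2 * C + 4 * (real h - 1) * C = (4 * real h - 2) * C" by (simp add: algebra_simps)
    ultimately show ?thesis by simp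
  qed
  have ineq2: "2/e * s + 8/e * (real h - 1) * s \<le> 8 / e * (real H * s)"
  proof -
    have "2/e * s + 8/e * (real h - 1) * s = (8 * real h - 6) * (s / e)" using e by (simp add: field_simps)
    also have "\<dots> \<le> (8 * real H) * (s / e)" using hH s0 e by (intro mult_right_mono) auto
    also have "\<dots> = 8 / e * (real H * s)" using e by (simp add: field_simps)
    finally show ?thesis .
  qed
  show ?thesis using main e1 e2 e3 ineq1 ineq2 by simp
qed

lemma psi_elem:
  "EE (traj M \<pi> H) (\<lambda>\<tau>. occ M \<pi> H h (\<tau> ! (h - 1)) /
            (occ_mix M p H h (\<tau> ! (h - 1)) + e * occ M \<pi> H h (\<tau> ! (h - 1)))) = PsiT M \<pi> p H h e"
  unfolding PsiT_def occ_eq occ_mix_eq by (rule traj_EE)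

lemma PsiT_bounds:
  assumes e: "0 < e"
  shows "0 \<le> PsiT M \<pi> p H h e" "PsiT M \<pi> p H h e \<le> 1 / e"
proof -
  have "0 \<le> pmf (Dl M \<pi> H h) z / (pmf (Dm M p H h) z + e * pmf (Dl M \<pi> H h) z)"
       "pmf (Dl M \<pi> H h) z / (pmf (Dm M p H h) z + e * pmf (Dl M \<pi> H h) z) \<le> 1 / e" for z
    by (rule ratio_bounds[OF pmf_nonneg pmf_nonneg e])+
  then show "0 \<le> PsiT M \<pi> p H h e" "PsiT M \<pi> p H h e \<le> 1 / e"
    unfolding PsiT_def by (rule EE_01[where B="1/e"])+
qed

lemma Psi_eq: "Psi M Pol H h e p = Sup (insert 0 ((\<lambda>\<pi>. PsiT M \<pi> p H h e) ` Pol))"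
  unfolding Psi_def psi_elem ..

lemma Psi_upper:
  assumes e: "0 < e" and \<pi>: "\<pi> \<in> Pol"
  shows "PsiT M \<pi> p H h e \<le> Psi M Pol H h e p"
  unfolding Psi_eq
proof (rule cSup_upper)
  show "PsiT M \<pi> p H h e \<in> insert 0 ((\<lambda>\<pi>. PsiT M \<pi> p H h e) ` Pol)" using \<pi> by simp
  show "bdd_above (insert 0 ((\<lambda>\<pi>. PsiT M \<pi> p H h e) ` Pol))"
    by (rule bdd_aboveI[where M="1/e"]) (use e PsiT_bounds[OF e] in auto)
qed

lemma Psi_least:
  assumes "\<And>\<pi>. \<pi> \<in> Pol \<Longrightarrow> PsiT M \<pi> p H h e \<le> B" and "0 \<le> B"
  shows "Psi M Pol H h e p \<le> B"
  unfolding Psi_eq by (rule cSup_least) (use assms in auto)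

lemma jensen_inv:
  fixes a e :: real and b :: "nat \<Rightarrow> real"
  assumes a: "0 \<le> a" and b: "\<And>t. 0 \<le> b t" and e: "0 < e" and T: "0 < T"
  shows "a / ((\<Sum>t<T. b t) / real T + e * a) \<le> (\<Sum>t<T. a / (b t + e * a)) / real T"
proof (cases "a = 0")
  case True then show ?thesis by simp
next
  case False
  then have a': "0 < a" using a by simp
  define y where "y t = b t + e * a" for t
  define m where "m = (\<Sum>t<T. b t) / real T + e * a"
  have y: "0 < y t" for t using b[of t] e a' by (simp add: y_def add_nonneg_pos)
  have m: "0 < m" using e a' T b by (simp add: m_def add_nonneg_pos sum_nonneg)
  have sy: "(\<Sum>t<T. y t) = real T * m" using T by (simp add: y_def m_def sum.distrib field_simps)
  have tan: "2 / m - y t / m^2 \<le> 1 / y t" for t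
  proof -
    have "0 \<le> (y t - m)^2 / (y t * m^2)" using y[of t] m by simp
    also have "(y t - m)^2 / (y t * m^2) = y t / m^2 - 2 / m + 1 / y t"
      using y[of t] m by (simp add: field_simps power2_eq_square)
    finally show ?thesis by simp
  qed
  have "(\<Sum>t<T. 2 / m - y t / m^2) \<le> (\<Sum>t<T. 1 / y t)" by (rule sum_mono) (rule tan)
  moreover have "(\<Sum>t<T. 2 / m - y t / m^2) = real T / m"
  proof -
    have "(\<Sum>t<T. 2 / m - y t / m^2) = real T * (2 / m) - (\<Sum>t<T. y t) / m^2"
      by (simp add: sum_subtractf sum_divide_distrib)
    also have "\<dots> = real T / m" unfolding sy using m by (simp add: field_simps power2_eq_square)
    finally show ?thesis .
  qed
  ultimately have "real T / m \<le> (\<Sum>t<T. 1 / y t)" by simp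
  then have "a * (real T / m) \<le> a * (\<Sum>t<T. 1 / y t)" by (rule mult_left_mono[OF _ a])
  then have "a / m \<le> (\<Sum>t<T. a / y t) / real T"
    using T by (simp add: sum_distrib_left field_simps)
  then show ?thesis by (simp add: m_def y_def)
qed

lemma sqrt_avg:
  fixes x :: "nat \<Rightarrow> real"
  assumes x: "\<And>t. 0 \<le> x t" and T: "0 < T"
  shows "(\<Sum>t<T. sqrt (x t)) / real T \<le> sqrt ((\<Sum>t<T. x t) / real T)"
proof (cases "(\<Sum>t<T. x t) = 0")
  case True
  then have "\<forall>t\<in>{..<T}. x t = 0" using x by (simp add: sum_nonneg_eq_0_iff)
  then show ?thesis by simp
next
  case False
  define m where "m = sqrt ((\<Sum>t<T. x t) / real T)"
  have S: "0 < (\<Sum>t<T. x t)" using False x by (simp add: sum_nonneg order_le_neq_trans)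
  have m: "0 < m" using S T by (simp add: m_def)
  have m2: "m^2 = (\<Sum>t<T. x t) / real T" using S T by (simp add: m_def)
  have am: "sqrt (x t) \<le> (x t + m^2) / (2 * m)" for t
  proof -
    have "0 \<le> (sqrt (x t) - m)^2" by simp
    then have "2 * m * sqrt (x t) \<le> x t + m^2" using x[of t] by (simp add: power2_eq_square algebra_simps)
    then show ?thesis using m by (simp add: field_simps)
  qed
  have "(\<Sum>t<T. sqrt (x t)) \<le> (\<Sum>t<T. (x t + m^2) / (2 * m))" by (rule sum_mono) (rule am)
  also have "\<dots> = ((\<Sum>t<T. x t) + real T * m^2) / (2 * m)"
    by (simp add: sum_divide_distrib[symmetric] sum.distrib)
  also have "\<dots> = real T * m"
  proof -
    have sx: "(\<Sum>t<T. x t) = real T * m^2" using m2 T by (simp add: field_simps)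
    show ?thesis unfolding sx using T m by (simp add: field_simps power2_eq_square)
  qed
  finally have "(\<Sum>t<T. sqrt (x t)) \<le> real T * m" .
  then show ?thesis using T by (simp add: m_def field_simps)
qed

lemma avg_step:
  fixes Ms :: "('x, 'a) mdp" and P :: "nat \<Rightarrow> ('x, 'a) policy pmf"
  assumes T: "0 < T" and e: "0 < e"
  shows "PsiT Ms \<pi> (bind_pmf (pmf_of_set {0..<T}) P) H h e \<le> (\<Sum>t<T. PsiT Ms \<pi> (P t) H h e) / real T"
proof -
  define A where "A = Dl Ms \<pi> H h"
  define b where "b t z = pmf (Dm Ms (P t) H h) z" for t z
  have ne: "{0..<T} \<noteq> {}" using T by simp
  have Dm_eq: "Dm Ms (bind_pmf (pmf_of_set {0..<T}) P) H h = bind_pmf (pmf_of_set {0..<T}) (\<lambda>t. Dm Ms (P t) H h)"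
    unfolding Dm_def by (simp add: bind_assoc_pmf)
  have B: "pmf (Dm Ms (bind_pmf (pmf_of_set {0..<T}) P) H h) z = (\<Sum>t<T. b t z) / real T" for z
    unfolding Dm_eq b_def using ne by (simp add: pmf_bind_pmf_of_set atLeast0LessThan)
  have rb: "\<bar>pmf A z / (b t z + e * pmf A z)\<bar> \<le> 1/e" for t z
    using ratio_bounds[of "pmf A z" "b t z" e] e by (simp add: b_def)
  have "PsiT Ms \<pi> (bind_pmf (pmf_of_set {0..<T}) P) H h e = EE A (\<lambda>z. pmf A z / ((\<Sum>t<T. b t z) / real T + e * pmf A z))"
    unfolding PsiT_def A_def[symmetric] B ..
  also have "\<dots> \<le> EE A (\<lambda>z. (\<Sum>t<T. pmf A z / (b t z + e * pmf A z)) / real T)"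
  proof (rule EE_mono[where B="1/e"])
    fix z
    have "0 \<le> (\<Sum>t<T. b t z) / real T" by (simp add: b_def sum_nonneg)
    then show "\<bar>pmf A z / ((\<Sum>t<T. b t z) / real T + e * pmf A z)\<bar> \<le> 1/e"
      using ratio_bounds[of "pmf A z" "(\<Sum>t<T. b t z) / real T" e] e by simp
    have "\<bar>\<Sum>t<T. pmf A z / (b t z + e * pmf A z)\<bar> \<le> (\<Sum>t<T. 1/e)"
      by (rule order_trans[OF sum_abs sum_mono]) (rule rb)
    then show "\<bar>(\<Sum>t<T. pmf A z / (b t z + e * pmf A z)) / real T\<bar> \<le> 1/e"
      using T by (simp add: field_simps)
    show "pmf A z / ((\<Sum>t<T. b t z) / real T + e * pmf A z) \<le> (\<Sum>t<T. pmf A z / (b t z + e * pmf A z)) / real T"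
      by (rule jensen_inv) (use e T in \<open>auto simp: b_def\<close>)
  qed
  also have "\<dots> = EE A (\<lambda>z. (\<Sum>t<T. pmf A z / (b t z + e * pmf A z))) / real T"
    by simp
  also have "EE A (\<lambda>z. (\<Sum>t<T. pmf A z / (b t z + e * pmf A z))) = (\<Sum>t<T. EE A (\<lambda>z. pmf A z / (b t z + e * pmf A z)))"
    by (rule EE_sum[OF rb])
  also have "\<dots> = (\<Sum>t<T. PsiT Ms \<pi> (P t) H h e)" by (simp add: PsiT_def A_def b_def)
  finally show ?thesis .
qed

lemma core:
  fixes Ms :: "('x, 'a) mdp" and Pol :: "('x, 'a) policy set"
    and orc :: "('x, 'a) hist \<Rightarrow> ('x, 'a) mdp"
    and cover :: "('x, 'a) hist \<Rightarrow> nat \<Rightarrow> ('x, 'a) policy pmf"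
    and H T :: nat and C \<epsilon> Est :: real
  assumes H_pos: "0 < H" and T_pos: "0 < T" and C_ge: "1 \<le> C" and eps_pos: "0 < \<epsilon>"
    and cover_feasible: "\<And>hs h. length hs < T \<Longrightarrow> h \<in> {1..H} \<Longrightarrow>
                           Psi (orc hs) Pol H h \<epsilon> (cover hs h) \<le> C"
    and E: "est_err orc (alg_lrn cover H) Ms H T hs \<le> Est"
    and h: "h \<in> {1..H}"
  shows "Psi Ms Pol H h \<epsilon> (alg_out cover T hs h)
                 \<le> 11 * H * C + 12 / \<epsilon> * sqrt (H ^ 3 * C * Est / T)
                    + 8 * H / \<epsilon> ^ 2 * (Est / T)"
proof -
  define D where "D t = EE (alg_lrn cover H (take t hs)) (\<lambda>\<pi>. hell2 (traj (orc (take t hs)) \<pi> H) (traj Ms \<pi> H))" for t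
  have D0: "0 \<le> D t" for t unfolding D_def by (simp add: integral_nonneg_AE hell2_ge0)
  have sumD: "(\<Sum>t<T. D t) = est_err orc (alg_lrn cover H) Ms H T hs" by (simp add: est_err_def D_def)
  have SD0: "0 \<le> (\<Sum>t<T. D t)" using D0 by (simp add: sum_nonneg)
  have SE: "(\<Sum>t<T. D t) \<le> Est" using sumD E by simp
  have Est0: "0 \<le> Est" using SD0 SE by linarith
  have h1: "1 \<le> h" "h \<le> H" using h by auto
  define c where "c = real H ^ 3 * C"
  have c0: "0 \<le> c" using C_ge by (simp add: c_def)
  have per: "PsiT Ms \<pi> (cover (take t hs) h) H h \<epsilon> \<le> 4 * H * C + 2 * H * D t / \<epsilon>^2 + 8 / \<epsilon> * sqrt (c * D t)"
    if \<pi>: "\<pi> \<in> Pol" and t: "t < T" for \<pi> t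
  proof -
    have cov: "PsiT (orc (take t hs)) \<pi> (cover (take t hs) l) H l \<epsilon> \<le> C" if l: "l \<in> {1..H}" for l
    proof -
      have "PsiT (orc (take t hs)) \<pi> (cover (take t hs) l) H l \<epsilon> \<le> Psi (orc (take t hs)) Pol H l \<epsilon> (cover (take t hs) l)"
        by (rule Psi_upper[OF eps_pos \<pi>])
      also have "\<dots> \<le> C" by (rule cover_feasible) (use t l in auto)
      finally show ?thesis .
    qed
    note X = per_t[where Ms=Ms, OF h1 eps_pos C_ge cov]
    have "EE (bind_pmf (pmf_of_set {1..H}) (cover (take t hs))) (\<lambda>\<pi>'. hell2 (traj (orc (take t hs)) \<pi>' H) (traj Ms \<pi>' H)) = D t"
      unfolding D_def alg_lrn_def by simp
    then show ?thesis using X by (simp add: c_def mult.assoc)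
  qed
  have bound0: "0 \<le> 11 * H * C + 12 / \<epsilon> * sqrt (H ^ 3 * C * Est / T) + 8 * H / \<epsilon> ^ 2 * (Est / T)"
    using C_ge eps_pos Est0 by simp
  show ?thesis
  proof (rule Psi_least[OF _ bound0])
    fix \<pi> assume \<pi>: "\<pi> \<in> Pol"
    have "PsiT Ms \<pi> (alg_out cover T hs h) H h \<epsilon> \<le> (\<Sum>t<T. PsiT Ms \<pi> (cover (take t hs) h) H h \<epsilon>) / real T"
      unfolding alg_out_def by (rule avg_step[OF T_pos eps_pos])
    also have "\<dots> \<le> (\<Sum>t<T. 4 * H * C + 2 * H * D t / \<epsilon>^2 + 8 / \<epsilon> * sqrt (c * D t)) / real T"
      using T_pos by (intro divide_right_mono sum_mono per[OF \<pi>]) auto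
    also have "(\<Sum>t<T. 4 * H * C + 2 * H * D t / \<epsilon>^2 + 8 / \<epsilon> * sqrt (c * D t))
        = (\<Sum>t<T. 4 * H * C + (2 * H / \<epsilon>^2) * D t + (8 / \<epsilon>) * sqrt (c * D t))"
      by simp
    also have "\<dots> = real T * (4 * H * C) + (2 * H / \<epsilon>^2) * (\<Sum>t<T. D t) + (8 / \<epsilon>) * (\<Sum>t<T. sqrt (c * D t))"
      by (simp add: sum.distrib sum_distrib_left)
    also have "(real T * (4 * H * C) + (2 * H / \<epsilon>^2) * (\<Sum>t<T. D t) + (8 / \<epsilon>) * (\<Sum>t<T. sqrt (c * D t))) / real T
       = 4 * H * C + 2 * H / \<epsilon>^2 * ((\<Sum>t<T. D t) / real T) + 8 / \<epsilon> * ((\<Sum>t<T. sqrt (c * D t)) / real T)"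
      using T_pos by (simp add: add_divide_distrib)
    also have "\<dots> \<le> 11 * H * C + 12 / \<epsilon> * sqrt (H ^ 3 * C * Est / T) + 8 * H / \<epsilon> ^ 2 * (Est / T)"
    proof -
      have a1: "4 * H * C \<le> 11 * H * C" using C_ge by simp
      have a2: "2 * H / \<epsilon>^2 * ((\<Sum>t<T. D t) / real T) \<le> 8 * H / \<epsilon> ^ 2 * (Est / T)"
      proof -
        have "(\<Sum>t<T. D t) / real T \<le> Est / T" using SE T_pos by (simp add: divide_right_mono)
        moreover have "0 \<le> (\<Sum>t<T. D t) / real T" using SD0 by simp
        moreover have "2 * H / \<epsilon>^2 \<le> 8 * H / \<epsilon> ^ 2" using eps_pos by (simp add: divide_right_mono)
        moreover have "0 \<le> 2 * H / \<epsilon>^2" by simp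
        ultimately show ?thesis by (meson mult_mono')
      qed
      have a3: "8 / \<epsilon> * ((\<Sum>t<T. sqrt (c * D t)) / real T) \<le> 12 / \<epsilon> * sqrt (H ^ 3 * C * Est / T)"
      proof -
        have "(\<Sum>t<T. sqrt (c * D t)) / real T \<le> sqrt ((\<Sum>t<T. c * D t) / real T)"
          by (rule sqrt_avg) (use c0 D0 T_pos in auto)
        also have "(\<Sum>t<T. c * D t) / real T = c * ((\<Sum>t<T. D t) / real T)" by (simp add: sum_distrib_left)
        also have "sqrt (c * ((\<Sum>t<T. D t) / real T)) \<le> sqrt (c * (Est / T))"
          using SE T_pos c0 by (intro real_sqrt_le_mono mult_left_mono divide_right_mono) auto
        also have "c * (Est / T) = H ^ 3 * C * Est / T" by (simp add: c_def)
        finally have s1: "(\<Sum>t<T. sqrt (c * D t)) / real T \<le> sqrt (H ^ 3 * C * Est / T)" .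
        have s0: "0 \<le> (\<Sum>t<T. sqrt (c * D t)) / real T"
          by (intro divide_nonneg_nonneg sum_nonneg real_sqrt_ge_zero mult_nonneg_nonneg c0 D0) simp
        have "8 / \<epsilon> * ((\<Sum>t<T. sqrt (c * D t)) / real T) \<le> 8 / \<epsilon> * sqrt (H ^ 3 * C * Est / T)"
          using eps_pos s1 by (intro mult_left_mono) auto
        also have "\<dots> \<le> 12 / \<epsilon> * sqrt (H ^ 3 * C * Est / T)"
          using eps_pos C_ge Est0 by (intro mult_right_mono divide_right_mono) auto
        finally show ?thesis .
      qed
      show ?thesis using a1 a2 a3 by linarith
    qed
    finally show "PsiT Ms \<pi> (alg_out cover T hs h) H h \<epsilon> \<le> 11 * H * C + 12 / \<epsilon> * sqrt (H ^ 3 * C * Est / T) + 8 * H / \<epsilon> ^ 2 * (Est / T)" .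
  qed
qed

theorem theoremI4:
  fixes \<M> :: "('x::countable, 'a) mdp set"
    and Ms :: "('x, 'a) mdp"
    and Pol :: "('x, 'a) policy set"
    and orc :: "('x, 'a) hist \<Rightarrow> ('x, 'a) mdp"
    and cover :: "('x, 'a) hist \<Rightarrow> nat \<Rightarrow> ('x, 'a) policy pmf"
    and H T :: nat and C \<epsilon> \<delta> :: real
    and Est :: "nat \<Rightarrow> real \<Rightarrow> real"
  assumes H_pos: "0 < H" and T_pos: "0 < T"
    and C_ge: "1 \<le> C" and eps_pos: "0 < \<epsilon>"
    and true_model: "Ms \<in> \<M>"
    and orc_range: "\<And>hs. orc hs \<in> \<M>"
    and online_est: "\<And>lrn. measure_pmf.prob (run lrn Ms H T)
                   {hs. est_err orc lrn Ms H T hs \<le> Est T \<delta>} \<ge> 1 - \<delta>"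
    and cover_in_Pi: "\<And>hs h. length hs < T \<Longrightarrow> h \<in> {1..H} \<Longrightarrow> set_pmf (cover hs h) \<subseteq> Pol"
    and cover_feasible: "\<And>hs h. length hs < T \<Longrightarrow> h \<in> {1..H} \<Longrightarrow>
                           Psi (orc hs) Pol H h \<epsilon> (cover hs h) \<le> C"
  shows "measure_pmf.prob (run (alg_lrn cover H) Ms H T)
           {hs. \<forall>h\<in>{1..H}. Psi Ms Pol H h \<epsilon> (alg_out cover T hs h)
                 \<le> 11 * H * C + 12 / \<epsilon> * sqrt (H ^ 3 * C * Est T \<delta> / T)
                    + 8 * H / \<epsilon> ^ 2 * (Est T \<delta> / T)} \<ge> 1 - \<delta>"
proof -
  have sub: "{hs. est_err orc (alg_lrn cover H) Ms H T hs \<le> Est T \<delta>} \<subseteq>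
           {hs. \<forall>h\<in>{1..H}. Psi Ms Pol H h \<epsilon> (alg_out cover T hs h)
                 \<le> 11 * H * C + 12 / \<epsilon> * sqrt (H ^ 3 * C * Est T \<delta> / T)
                    + 8 * H / \<epsilon> ^ 2 * (Est T \<delta> / T)}"
  proof (intro subsetI CollectI ballI)
    fix hs h assume hs: "hs \<in> {hs. est_err orc (alg_lrn cover H) Ms H T hs \<le> Est T \<delta>}" and h: "h \<in> {1..H}"
    show "Psi Ms Pol H h \<epsilon> (alg_out cover T hs h)
                 \<le> 11 * H * C + 12 / \<epsilon> * sqrt (H ^ 3 * C * Est T \<delta> / T)
                    + 8 * H / \<epsilon> ^ 2 * (Est T \<delta> / T)"
      by (rule core[OF H_pos T_pos C_ge eps_pos cover_feasible _ h]) (use hs in auto)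
  qed
  have "measure_pmf.prob (run (alg_lrn cover H) Ms H T) {hs. est_err orc (alg_lrn cover H) Ms H T hs \<le> Est T \<delta>}
     \<le> measure_pmf.prob (run (alg_lrn cover H) Ms H T) {hs. \<forall>h\<in>{1..H}. Psi Ms Pol H h \<epsilon> (alg_out cover T hs h)
                 \<le> 11 * H * C + 12 / \<epsilon> * sqrt (H ^ 3 * C * Est T \<delta> / T)
                    + 8 * H / \<epsilon> ^ 2 * (Est T \<delta> / T)}"
    by (rule measure_pmf.finite_measure_mono[OF sub]) simp
  then show ?thesis using online_est[of "alg_lrn cover H"] by linarith
qed

end
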